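(* Every sentence over the signature $\sigma_1$ derivable in $\mathit{HT}_{\#2}^{\omega}$ from the axioms $D_0$ is provable in $\mathit{HT}_{\#}^{\omega}$.
   Context: $\sigma_1$ is the two-sorted signature (general, integer) with numerals, other precomputed terms (totally ordered, numerals contiguous), integer arithmetic, predicates $p/n$, comparisons $=,\neq,<,>,\leq,\geq$, and predicate constants $\mathit{Atleast}^{\mathbf{X};\mathbf{V}}_F$, $\mathit{Atmost}^{\mathbf{X};\mathbf{V}}_F$; $\sigma_2$ additionally contains $\mathit{Start}^{\mathbf{X};\mathbf{V}}_F$ (last argument integer). $D_0$: $\forall\mathbf{X}\mathbf{V}N(N\leq\overline 0\to\mathit{Start}^{\mathbf{X};\mathbf{V}}_F(\mathbf{X},\mathbf{V},N))$, $\forall\mathbf{X}\mathbf{V}(\mathit{Start}^{\mathbf{X};\mathbf{V}}_F(\mathbf{X},\mathbf{V},\overline 1)\leftrightarrow F)$, $\forall\mathbf{X}\mathbf{V}N(N>\overline 0\to(\mathit{Start}^{\mathbf{X};\mathbf{V}}_F(\mathbf{X},\mathbf{V},N+\overline 1)\leftrightarrow F\land\exists\mathbf{U}(\mathbf{X}<\mathbf{U}\land\mathit{Start}^{\mathbf{X};\mathbf{V}}_F(\mathbf{U},\mathbf{V},N))))$ ($<$ lexicographic). $\mathit{HT}_{\#}^{\omega}$ is intuitionistic natural deduction over $\sigma_1$, and $\mathit{HT}_{\#2}^{\omega}$ the same over $\sigma_2$, each extended by $F\lor(F\to G)\lor\neg G$, $\exists X(F\to\forall XF)$, Std (sentences without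 $p/n$ and without Atleast/Atmost/Start true in the standard interpretation), Defs (the sentences $\forall\mathbf{V}(\mathit{Atleast}^{\mathbf{X};\mathbf{V}}_F(\mathbf{V},r)\leftrightarrow\exists_{\geq r}\mathbf{X}F)$, $\forall\mathbf{V}(\mathit{Atmost}^{\mathbf{X};\mathbf{V}}_F(\mathbf{V},r)\leftrightarrow\exists_{\leq r}\mathbf{X}F)$ for each precomputed $r$, with $\exists_{\geq r}$/$\exists_{\leq r}$ the first-order "at least/at most $r$ values" expansions), and the $\omega$-rules (infer $\Gamma\Rightarrow\forall XF$ from $\Gamma\Rightarrow F^X_t$ for all precomputed $t$; infer $\Gamma\Rightarrow\forall NF$ from $\Gamma\Rightarrow F^N_{\overline n}$ for all integers $n$). *)

theory Defs
  imports Main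
begin

section \<open>Syntax of the two-sorted language\<close>

text \<open>Precomputed terms form an abstract linearly ordered type 'p; the numerals are
  given by an injection num :: int => 'p (assumed strictly monotone and with
  contiguous range in the main theorem).  Variables are general (GV) or integer (IV).\<close>

datatype var = GV nat | IV nat

datatype 'p trm =
    Pre 'p                       \<comment> \<open>precomputed term (numerals are Pre (num n))\<close>
  | Var var
  | Plus "'p trm" "'p trm"
  | Minus "'p trm" "'p trm"
  | Times "'p trm" "'p trm"

datatype cmp = Eq | Ne | Lt | Gt | Le | Ge

text \<open>Atleast X V F ts r is the atom Atleast^{X;V}_F(ts, r);
  Start X V F xs vs n is the atom Start^{X;V}_F(xs, vs, n).
  Pred p ts is the atom p/n(ts) with n = length ts.\<close>

datatype 'p form =
    Bot
  | Pred nat "'p trm list"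
  | Cmp cmp "'p trm" "'p trm"
  | Atleast "var list" "var list" "'p form" "'p trm list" "'p trm"
  | Atmost "var list" "var list" "'p form" "'p trm list" "'p trm"
  | Start "var list" "var list" "'p form" "'p trm list" "'p trm list" "'p trm"
  | And "'p form" "'p form"
  | Or "'p form" "'p form"
  | Imp "'p form" "'p form"
  | All var "'p form"
  | Ex var "'p form"

definition Neg :: "'p form \<Rightarrow> 'p form" where "Neg F = Imp F Bot"
definition Top :: "'p form" where "Top = Imp Bot Bot"
definition Iff :: "'p form \<Rightarrow> 'p form \<Rightarrow> 'p form" where "Iff F G = And (Imp F G) (Imp G F)"

fun isG :: "var \<Rightarrow> bool" where "isG (GV n) = True" | "isG (IV n) = False"
fun vidx :: "var \<Rightarrow> nat" where "vidx (GV n) = n" | "vidx (IV n) = n"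

fun tvars :: "'p trm \<Rightarrow> var set" where
  "tvars (Pre p) = {}"
| "tvars (Var v) = {v}"
| "tvars (Plus a b) = tvars a \<union> tvars b"
| "tvars (Minus a b) = tvars a \<union> tvars b"
| "tvars (Times a b) = tvars a \<union> tvars b"

fun fv :: "'p form \<Rightarrow> var set" where
  "fv Bot = {}"
| "fv (Pred p ts) = \<Union>(tvars ` set ts)"
| "fv (Cmp c a b) = tvars a \<union> tvars b"
| "fv (Atleast X V G ts r) = \<Union>(tvars ` set ts) \<union> tvars r"
| "fv (Atmost X V G ts r) = \<Union>(tvars ` set ts) \<union> tvars r"
| "fv (Start X V G xs vs n) = \<Union>(tvars ` set (xs @ vs)) \<union> tvars n"
| "fv (And F G) = fv F \<union> fv G"
| "fv (Or F G) = fv F \<union> fv G"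
| "fv (Imp F G) = fv F \<union> fv G"
| "fv (All v F) = fv F - {v}"
| "fv (Ex v F) = fv F - {v}"

text \<open>All variables occurring anywhere (used only to pick fresh variables).\<close>
fun allvars :: "'p form \<Rightarrow> var set" where
  "allvars Bot = {}"
| "allvars (Pred p ts) = \<Union>(tvars ` set ts)"
| "allvars (Cmp c a b) = tvars a \<union> tvars b"
| "allvars (Atleast X V G ts r) = set X \<union> set V \<union> allvars G \<union> \<Union>(tvars ` set ts) \<union> tvars r"
| "allvars (Atmost X V G ts r) = set X \<union> set V \<union> allvars G \<union> \<Union>(tvars ` set ts) \<union> tvars r"
| "allvars (Start X V G xs vs n) = set X \<union> set V \<union> allvars G \<union> \<Union>(tvars ` set (xs @ vs)) \<union> tvars n"
| "allvars (And F G) = allvars F \<union> allvars G"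
| "allvars (Or F G) = allvars F \<union> allvars G"
| "allvars (Imp F G) = allvars F \<union> allvars G"
| "allvars (All v F) = insert v (allvars F)"
| "allvars (Ex v F) = insert v (allvars F)"

fun substt :: "var \<Rightarrow> 'p trm \<Rightarrow> 'p trm \<Rightarrow> 'p trm" where
  "substt v s (Pre p) = Pre p"
| "substt v s (Var w) = (if w = v then s else Var w)"
| "substt v s (Plus a b) = Plus (substt v s a) (substt v s b)"
| "substt v s (Minus a b) = Minus (substt v s a) (substt v s b)"
| "substt v s (Times a b) = Times (substt v s a) (substt v s b)"

text \<open>Substitution of s for the free occurrences of v (no renaming; used only
  together with the side condition freefor).\<close>
fun subst :: "var \<Rightarrow> 'p trm \<Rightarrow> 'p form \<Rightarrow> 'p form" where
  "subst v s Bot = Bot"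
| "subst v s (Pred p ts) = Pred p (map (substt v s) ts)"
| "subst v s (Cmp c a b) = Cmp c (substt v s a) (substt v s b)"
| "subst v s (Atleast X V G ts r) = Atleast X V G (map (substt v s) ts) (substt v s r)"
| "subst v s (Atmost X V G ts r) = Atmost X V G (map (substt v s) ts) (substt v s r)"
| "subst v s (Start X V G xs vs n) = Start X V G (map (substt v s) xs) (map (substt v s) vs) (substt v s n)"
| "subst v s (And F G) = And (subst v s F) (subst v s G)"
| "subst v s (Or F G) = Or (subst v s F) (subst v s G)"
| "subst v s (Imp F G) = Imp (subst v s F) (subst v s G)"
| "subst v s (All w F) = (if w = v then All w F else All w (subst v s F))"
| "subst v s (Ex w F) = (if w = v then Ex w F else Ex w (subst v s F))"

fun freefor :: "'p trm \<Rightarrow> var \<Rightarrow> 'p form \<Rightarrow> bool" where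
  "freefor s v (And F G) = (freefor s v F \<and> freefor s v G)"
| "freefor s v (Or F G) = (freefor s v F \<and> freefor s v G)"
| "freefor s v (Imp F G) = (freefor s v F \<and> freefor s v G)"
| "freefor s v (All w F) = (v \<notin> fv (All w F) \<or> (w \<notin> tvars s \<and> freefor s v F))"
| "freefor s v (Ex w F) = (v \<notin> fv (Ex w F) \<or> (w \<notin> tvars s \<and> freefor s v F))"
| "freefor s v _ = True"

section \<open>Well-sortedness and signatures\<close>

fun itrm :: "(int \<Rightarrow> 'p) \<Rightarrow> 'p trm \<Rightarrow> bool" where
  "itrm num (Pre p) = (\<exists>k. p = num k)"
| "itrm num (Var v) = (\<not> isG v)"
| "itrm num (Plus a b) = (itrm num a \<and> itrm num b)"
| "itrm num (Minus a b) = (itrm num a \<and> itrm num b)"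
| "itrm num (Times a b) = (itrm num a \<and> itrm num b)"

definition gtrm :: "(int \<Rightarrow> 'p) \<Rightarrow> 'p trm \<Rightarrow> bool" where
  "gtrm num t = (case t of Pre p \<Rightarrow> True | Var v \<Rightarrow> True | _ \<Rightarrow> itrm num t)"

definition sortok :: "(int \<Rightarrow> 'p) \<Rightarrow> var \<Rightarrow> 'p trm \<Rightarrow> bool" where
  "sortok num v t = (if isG v then gtrm num t else itrm num t)"

fun base :: "'p form \<Rightarrow> bool" where
  "base (Atleast X V G ts r) = False"
| "base (Atmost X V G ts r) = False"
| "base (Start X V G xs vs n) = False"
| "base (And F G) = (base F \<and> base G)"
| "base (Or F G) = (base F \<and> base G)"
| "base (Imp F G) = (base F \<and> base G)"
| "base (All v F) = base F"
| "base (Ex v F) = base F"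
| "base _ = True"

fun noStart :: "'p form \<Rightarrow> bool" where
  "noStart (Start X V G xs vs n) = False"
| "noStart (And F G) = (noStart F \<and> noStart G)"
| "noStart (Or F G) = (noStart F \<and> noStart G)"
| "noStart (Imp F G) = (noStart F \<and> noStart G)"
| "noStart (All v F) = noStart F"
| "noStart (Ex v F) = noStart F"
| "noStart _ = True"

fun nopa :: "'p form \<Rightarrow> bool" where
  "nopa Bot = True"
| "nopa (Cmp c a b) = True"
| "nopa (And F G) = (nopa F \<and> nopa G)"
| "nopa (Or F G) = (nopa F \<and> nopa G)"
| "nopa (Imp F G) = (nopa F \<and> nopa G)"
| "nopa (All v F) = nopa F"
| "nopa (Ex v F) = nopa F"
| "nopa _ = False"

definition aggok :: "var list \<Rightarrow> var list \<Rightarrow> 'p form \<Rightarrow> bool" where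
  "aggok X V G = (distinct (X @ V) \<and> (\<forall>v\<in>set (X @ V). isG v) \<and> base G \<and> fv G \<subseteq> set X \<union> set V)"

fun wf :: "(int \<Rightarrow> 'p) \<Rightarrow> 'p form \<Rightarrow> bool" where
  "wf num Bot = True"
| "wf num (Pred p ts) = (\<forall>t\<in>set ts. gtrm num t)"
| "wf num (Cmp c a b) = (gtrm num a \<and> gtrm num b)"
| "wf num (Atleast X V G ts r) = (aggok X V G \<and> wf num G \<and> length ts = length V
      \<and> (\<forall>t\<in>set ts. gtrm num t) \<and> gtrm num r)"
| "wf num (Atmost X V G ts r) = (aggok X V G \<and> wf num G \<and> length ts = length V
      \<and> (\<forall>t\<in>set ts. gtrm num t) \<and> gtrm num r)"
| "wf num (Start X V G xs vs n) = (aggok X V G \<and> wf num G \<and> length xs = length X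
      \<and> length vs = length V \<and> (\<forall>t\<in>set (xs @ vs). gtrm num t) \<and> itrm num n)"
| "wf num (And F G) = (wf num F \<and> wf num G)"
| "wf num (Or F G) = (wf num F \<and> wf num G)"
| "wf num (Imp F G) = (wf num F \<and> wf num G)"
| "wf num (All v F) = wf num F"
| "wf num (Ex v F) = wf num F"

definition aggwf :: "(int \<Rightarrow> 'p) \<Rightarrow> var list \<Rightarrow> var list \<Rightarrow> 'p form \<Rightarrow> bool" where
  "aggwf num X V G = (aggok X V G \<and> wf num G)"

definition sig1 :: "(int \<Rightarrow> 'p) \<Rightarrow> 'p form \<Rightarrow> bool" where
  "sig1 num F = (wf num F \<and> noStart F)"
definition sig2 :: "(int \<Rightarrow> 'p) \<Rightarrow> 'p form \<Rightarrow> bool" where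
  "sig2 num F = wf num F"

definition sentence1 :: "(int \<Rightarrow> 'p) \<Rightarrow> 'p form \<Rightarrow> bool" where
  "sentence1 num F = (sig1 num F \<and> fv F = {})"

section \<open>Standard interpretation (for Std)\<close>

definition toint :: "(int \<Rightarrow> 'p) \<Rightarrow> 'p \<Rightarrow> int" where
  "toint num p = (THE k. num k = p)"

fun tval :: "(int \<Rightarrow> 'p) \<Rightarrow> (var \<Rightarrow> 'p) \<Rightarrow> 'p trm \<Rightarrow> 'p" where
  "tval num e (Pre p) = p"
| "tval num e (Var v) = e v"
| "tval num e (Plus a b) = num (toint num (tval num e a) + toint num (tval num e b))"
| "tval num e (Minus a b) = num (toint num (tval num e a) - toint num (tval num e b))"
| "tval num e (Times a b) = num (toint num (tval num e a) * toint num (tval num e b))"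

fun cmpv :: "cmp \<Rightarrow> 'p::linorder \<Rightarrow> 'p \<Rightarrow> bool" where
  "cmpv Eq x y = (x = y)"
| "cmpv Ne x y = (x \<noteq> y)"
| "cmpv Lt x y = (x < y)"
| "cmpv Gt x y = (x > y)"
| "cmpv Le x y = (x \<le> y)"
| "cmpv Ge x y = (x \<ge> y)"

text \<open>Truth in the standard interpretation (general variables range over precomputed
  terms, integer variables over numerals); only meaningful for nopa formulas.\<close>
fun sat :: "(int \<Rightarrow> 'p::linorder) \<Rightarrow> (var \<Rightarrow> 'p) \<Rightarrow> 'p form \<Rightarrow> bool" where
  "sat num e Bot = False"
| "sat num e (Pred p ts) = False"
| "sat num e (Cmp c a b) = cmpv c (tval num e a) (tval num e b)"
| "sat num e (Atleast X V G ts r) = False"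
| "sat num e (Atmost X V G ts r) = False"
| "sat num e (Start X V G xs vs n) = False"
| "sat num e (And F G) = (sat num e F \<and> sat num e G)"
| "sat num e (Or F G) = (sat num e F \<or> sat num e G)"
| "sat num e (Imp F G) = (sat num e F \<longrightarrow> sat num e G)"
| "sat num e (All v F) = (if isG v then (\<forall>p. sat num (e(v := p)) F)
                          else (\<forall>k. sat num (e(v := num k)) F))"
| "sat num e (Ex v F) = (if isG v then (\<exists>p. sat num (e(v := p)) F)
                          else (\<exists>k. sat num (e(v := num k)) F))"

definition Std :: "(int \<Rightarrow> 'p::linorder) \<Rightarrow> 'p form set" where
  "Std num = {F. wf num F \<and> fv F = {} \<and> nopa F \<and> (\<forall>e. sat num e F)}"

section \<open>Counting formulas and Defs\<close>

definition alls :: "var list \<Rightarrow> 'p form \<Rightarrow> 'p form" where "alls vs F = foldr All vs F"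
definition exs :: "var list \<Rightarrow> 'p form \<Rightarrow> 'p form" where "exs vs F = foldr Ex vs F"
definition conjs :: "'p form list \<Rightarrow> 'p form" where "conjs Fs = foldr And Fs Top"
definition disjs :: "'p form list \<Rightarrow> 'p form" where "disjs Fs = foldr Or Fs Bot"

definition tupeq :: "var list \<Rightarrow> var list \<Rightarrow> 'p form" where
  "tupeq xs ys = conjs (map2 (\<lambda>a b. Cmp Eq (Var a) (Var b)) xs ys)"

definition pairs :: "nat \<Rightarrow> (nat \<times> nat) list" where
  "pairs n = [(i, j). i \<leftarrow> [0..<n], j \<leftarrow> [0..<n], i < j]"

definition freshb :: "'p form \<Rightarrow> var list \<Rightarrow> nat" where
  "freshb G X = Suc (Max (insert 0 (vidx ` (allvars G \<union> set X))))"

definition copyvars :: "nat \<Rightarrow> nat \<Rightarrow> nat \<Rightarrow> var list" where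
  "copyvars b k i = map (\<lambda>j. GV (b + i * k + j)) [0..<k]"

definition renameF :: "var list \<Rightarrow> var list \<Rightarrow> 'p form \<Rightarrow> 'p form" where
  "renameF X Y G = foldr (\<lambda>(x, y) H. subst x (Var y) H) (zip X Y) G"

text \<open>exists_{>= r} X G : "there are at least r values of the tuple X satisfying G"\<close>
definition atleastF :: "(int \<Rightarrow> 'p::linorder) \<Rightarrow> var list \<Rightarrow> 'p form \<Rightarrow> 'p \<Rightarrow> 'p form" where
  "atleastF num X G r =
    (let b = freshb G X; Y = copyvars b (length X); H = (\<lambda>i. renameF X (Y i) G) in
     if (\<exists>n. r = num n) then
       (let n = toint num r in
        if n \<le> 0 then Top
        else exs (concat (map Y [0..<nat n]))
               (And (conjs (map H [0..<nat n]))
                    (conjs (map (\<lambda>(i, j). Neg (tupeq (Y i) (Y j))) (pairs (nat n))))))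
     else if (\<forall>n. r < num n) then Top else Bot)"

text \<open>exists_{<= r} X G : "there are at most r values of the tuple X satisfying G"\<close>
definition atmostF :: "(int \<Rightarrow> 'p::linorder) \<Rightarrow> var list \<Rightarrow> 'p form \<Rightarrow> 'p \<Rightarrow> 'p form" where
  "atmostF num X G r =
    (let b = freshb G X; Y = copyvars b (length X); H = (\<lambda>i. renameF X (Y i) G) in
     if (\<exists>n. r = num n) then
       (let n = toint num r in
        if n < 0 then Bot
        else alls (concat (map Y [0..<nat n + 1]))
               (Imp (conjs (map H [0..<nat n + 1]))
                    (disjs (map (\<lambda>(i, j). tupeq (Y i) (Y j)) (pairs (nat n + 1))))))
     else if (\<forall>n. r < num n) then Bot else Top)"

definition Defs :: "(int \<Rightarrow> 'p::linorder) \<Rightarrow> 'p form set" where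
  "Defs num =
     {alls V (Iff (Atleast X V G (map Var V) (Pre r)) (atleastF num X G r)) | X V G r. aggwf num X V G}
   \<union> {alls V (Iff (Atmost X V G (map Var V) (Pre r)) (atmostF num X G r)) | X V G r. aggwf num X V G}"

section \<open>The axioms D_0 for Start\<close>

fun lexless :: "'p trm list \<Rightarrow> 'p trm list \<Rightarrow> 'p form" where
  "lexless (x # xs) (u # us) = Or (Cmp Lt x u) (And (Cmp Eq x u) (lexless xs us))"
| "lexless _ _ = Bot"

definition D0 :: "(int \<Rightarrow> 'p) \<Rightarrow> 'p form set" where
  "D0 num = \<Union> {(let b = freshb G (X @ V); N = IV b;
                   U = map (\<lambda>j. GV (b + 1 + j)) [0..<length X];
                   Xs = map Var X; Vs = map Var V; Us = map Var U in
      { alls (X @ V @ [N]) (Imp (Cmp Le (Var N) (Pre (num 0))) (Start X V G Xs Vs (Var N))),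
        alls (X @ V) (Iff (Start X V G Xs Vs (Pre (num 1))) G),
        alls (X @ V @ [N]) (Imp (Cmp Gt (Var N) (Pre (num 0)))
           (Iff (Start X V G Xs Vs (Plus (Var N) (Pre (num 1))))
                (And G (exs U (And (lexless Xs Us) (Start X V G Us Vs (Var N)))))))})
     | X V G. aggwf num X V G}"

section \<open>The deductive systems\<close>

definition HTax :: "(int \<Rightarrow> 'p::linorder) \<Rightarrow> 'p form set" where
  "HTax num = {Or F (Or (Imp F G) (Neg G)) | F G. True}
            \<union> {Ex (GV n) (Imp F (All (GV n) F)) | n F. True}
            \<union> Std num \<union> Defs num"

definition ok :: "('p form \<Rightarrow> bool) \<Rightarrow> 'p form set \<Rightarrow> 'p form \<Rightarrow> bool" where
  "ok L \<Gamma> F = (finite \<Gamma> \<and> (\<forall>G\<in>\<Gamma>. L G) \<and> L F)"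

text \<open>Every sequent in a derivation is required to be over L.\<close>
inductive deriv :: "(int \<Rightarrow> 'p) \<Rightarrow> ('p form \<Rightarrow> bool) \<Rightarrow> 'p form set \<Rightarrow> 'p form set \<Rightarrow> 'p form \<Rightarrow> bool"
  for num L A where
  ax: "F \<in> A \<Longrightarrow> ok L \<Gamma> F \<Longrightarrow> deriv num L A \<Gamma> F"
| hyp: "F \<in> \<Gamma> \<Longrightarrow> ok L \<Gamma> F \<Longrightarrow> deriv num L A \<Gamma> F"
| weak: "deriv num L A \<Gamma> F \<Longrightarrow> \<Gamma> \<subseteq> \<Delta> \<Longrightarrow> ok L \<Delta> F \<Longrightarrow> deriv num L A \<Delta> F"
| botE: "deriv num L A \<Gamma> Bot \<Longrightarrow> ok L \<Gamma> F \<Longrightarrow> deriv num L A \<Gamma> F"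
| andI: "deriv num L A \<Gamma> F \<Longrightarrow> deriv num L A \<Gamma> G \<Longrightarrow> ok L \<Gamma> (And F G) \<Longrightarrow> deriv num L A \<Gamma> (And F G)"
| andE1: "deriv num L A \<Gamma> (And F G) \<Longrightarrow> ok L \<Gamma> F \<Longrightarrow> deriv num L A \<Gamma> F"
| andE2: "deriv num L A \<Gamma> (And F G) \<Longrightarrow> ok L \<Gamma> G \<Longrightarrow> deriv num L A \<Gamma> G"
| orI1: "deriv num L A \<Gamma> F \<Longrightarrow> ok L \<Gamma> (Or F G) \<Longrightarrow> deriv num L A \<Gamma> (Or F G)"
| orI2: "deriv num L A \<Gamma> G \<Longrightarrow> ok L \<Gamma> (Or F G) \<Longrightarrow> deriv num L A \<Gamma> (Or F G)"
| orE: "deriv num L A \<Gamma> (Or F G) \<Longrightarrow> deriv num L A (insert F \<Gamma>) H \<Longrightarrow>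
        deriv num L A (insert G \<Gamma>) H \<Longrightarrow> ok L \<Gamma> H \<Longrightarrow> deriv num L A \<Gamma> H"
| impI: "deriv num L A (insert F \<Gamma>) G \<Longrightarrow> ok L \<Gamma> (Imp F G) \<Longrightarrow> deriv num L A \<Gamma> (Imp F G)"
| impE: "deriv num L A \<Gamma> F \<Longrightarrow> deriv num L A \<Gamma> (Imp F G) \<Longrightarrow> ok L \<Gamma> G \<Longrightarrow> deriv num L A \<Gamma> G"
| allI: "deriv num L A \<Gamma> F \<Longrightarrow> v \<notin> \<Union>(fv ` \<Gamma>) \<Longrightarrow> ok L \<Gamma> (All v F) \<Longrightarrow>
        deriv num L A \<Gamma> (All v F)"
| allE: "deriv num L A \<Gamma> (All v F) \<Longrightarrow> sortok num v t \<Longrightarrow> freefor t v F \<Longrightarrow>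
        ok L \<Gamma> (subst v t F) \<Longrightarrow> deriv num L A \<Gamma> (subst v t F)"
| exI: "deriv num L A \<Gamma> (subst v t F) \<Longrightarrow> sortok num v t \<Longrightarrow> freefor t v F \<Longrightarrow>
        ok L \<Gamma> (Ex v F) \<Longrightarrow> deriv num L A \<Gamma> (Ex v F)"
| exE: "deriv num L A \<Gamma> (Ex v F) \<Longrightarrow> deriv num L A (insert F \<Gamma>) G \<Longrightarrow>
        v \<notin> fv G \<union> \<Union>(fv ` \<Gamma>) \<Longrightarrow> ok L \<Gamma> G \<Longrightarrow> deriv num L A \<Gamma> G"
| eqRefl: "ok L \<Gamma> (Cmp Eq t t) \<Longrightarrow> deriv num L A \<Gamma> (Cmp Eq t t)"
| eqSubst: "deriv num L A \<Gamma> (Cmp Eq s t) \<Longrightarrow> deriv num L A \<Gamma> (subst v s F) \<Longrightarrow>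
        sortok num v s \<Longrightarrow> sortok num v t \<Longrightarrow> freefor s v F \<Longrightarrow> freefor t v F \<Longrightarrow>
        ok L \<Gamma> (subst v t F) \<Longrightarrow> deriv num L A \<Gamma> (subst v t F)"
| omegaG: "(\<And>p. deriv num L A \<Gamma> (subst (GV n) (Pre p) F)) \<Longrightarrow> ok L \<Gamma> (All (GV n) F) \<Longrightarrow>
        deriv num L A \<Gamma> (All (GV n) F)"
| omegaI: "(\<And>k. deriv num L A \<Gamma> (subst (IV n) (Pre (num k)) F)) \<Longrightarrow> ok L \<Gamma> (All (IV n) F) \<Longrightarrow>
        deriv num L A \<Gamma> (All (IV n) F)"

definition HTsharp :: "(int \<Rightarrow> 'p::linorder) \<Rightarrow> 'p form \<Rightarrow> bool" where
  "HTsharp num F = deriv num (sig1 num) (HTax num) {} F"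

definition HTsharp2_from :: "(int \<Rightarrow> 'p::linorder) \<Rightarrow> 'p form set \<Rightarrow> 'p form \<Rightarrow> bool" where
  "HTsharp2_from num Ax F = deriv num (sig2 num) (HTax num \<union> Ax) {} F"

end

theory Submission
  imports Defs "HOL-Library.List_Lexorder"
begin

fun tsub :: "(var \<Rightarrow> 'p trm) \<Rightarrow> 'p trm \<Rightarrow> 'p trm" where
  "tsub s (Pre p) = Pre p"
| "tsub s (Var v) = s v"
| "tsub s (Plus a b) = Plus (tsub s a) (tsub s b)"
| "tsub s (Minus a b) = Minus (tsub s a) (tsub s b)"
| "tsub s (Times a b) = Times (tsub s a) (tsub s b)"

fun ssub :: "(var \<Rightarrow> 'p trm) \<Rightarrow> 'p form \<Rightarrow> 'p form" where
  "ssub s Bot = Bot"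
| "ssub s (Pred p ts) = Pred p (map (tsub s) ts)"
| "ssub s (Cmp c a b) = Cmp c (tsub s a) (tsub s b)"
| "ssub s (Atleast X V G ts r) = Atleast X V G (map (tsub s) ts) (tsub s r)"
| "ssub s (Atmost X V G ts r) = Atmost X V G (map (tsub s) ts) (tsub s r)"
| "ssub s (Start X V G xs vs n) = Start X V G (map (tsub s) xs) (map (tsub s) vs) (tsub s n)"
| "ssub s (And F G) = And (ssub s F) (ssub s G)"
| "ssub s (Or F G) = Or (ssub s F) (ssub s G)"
| "ssub s (Imp F G) = Imp (ssub s F) (ssub s G)"
| "ssub s (All w F) = All w (ssub (s(w := Var w)) F)"
| "ssub s (Ex w F) = Ex w (ssub (s(w := Var w)) F)"

fun bvars :: "'p form \<Rightarrow> var set" where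
  "bvars (And F G) = bvars F \<union> bvars G"
| "bvars (Or F G) = bvars F \<union> bvars G"
| "bvars (Imp F G) = bvars F \<union> bvars G"
| "bvars (All v F) = insert v (bvars F)"
| "bvars (Ex v F) = insert v (bvars F)"
| "bvars _ = {}"

lemma tsub_Var[simp]: "tsub Var t = t"
  by (induction t) auto

lemma tsub_Var'[simp]: "tsub Var = (\<lambda>t. t)"
  by (rule ext) simp

lemma ssub_Var[simp]: "ssub Var F = F"
proof (induction F)
qed (auto simp: fun_upd_idem_iff)

lemma tsub_cong: "(\<And>v. v \<in> tvars t \<Longrightarrow> s v = s' v) \<Longrightarrow> tsub s t = tsub s' t"
  by (induction t) auto

lemma ssub_cong: "(\<And>v. v \<in> fv F \<Longrightarrow> s v = s' v) \<Longrightarrow> ssub s F = ssub s' F"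
proof (induction F arbitrary: s s')
  case (Pred p ts) then show ?case by (auto intro!: tsub_cong)
next
  case (Cmp c a b) then show ?case by (auto intro!: tsub_cong)
next
  case (Atleast X V G ts r) then show ?case by (auto intro!: tsub_cong)
next
  case (Atmost X V G ts r) then show ?case by (auto intro!: tsub_cong)
next
  case (Start X V G xs vs n)
  have h: "\<And>v. v \<in> \<Union>(tvars ` set xs) \<or> v \<in> \<Union>(tvars ` set vs) \<or> v \<in> tvars n \<Longrightarrow> s v = s' v"
    using Start.prems by auto
  have e1: "map (tsub s) xs = map (tsub s') xs" by (intro map_cong refl tsub_cong) (use h in blast)
  have e2: "map (tsub s) vs = map (tsub s') vs" by (intro map_cong refl tsub_cong) (use h in blast)
  have e3: "tsub s n = tsub s' n" by (intro tsub_cong) (use h in blast)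
  show ?case unfolding ssub.simps e1 e2 e3 by (rule refl)
next
  case (All w F)
  have "ssub (s(w := Var w)) F = ssub (s'(w := Var w)) F" by (rule All.IH) (use All.prems in auto)
  then show ?case by simp
next
  case (Ex w F)
  have "ssub (s(w := Var w)) F = ssub (s'(w := Var w)) F" by (rule Ex.IH) (use Ex.prems in auto)
  then show ?case by simp
next
  case (And F G)
  have "ssub s F = ssub s' F" by (rule And.IH(1)) (use And.prems in auto)
  moreover have "ssub s G = ssub s' G" by (rule And.IH(2)) (use And.prems in auto)
  ultimately show ?case by simp
next
  case (Or F G)
  have "ssub s F = ssub s' F" by (rule Or.IH(1)) (use Or.prems in auto)
  moreover have "ssub s G = ssub s' G" by (rule Or.IH(2)) (use Or.prems in auto)
  ultimately show ?case by simp
next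
  case (Imp F G)
  have "ssub s F = ssub s' F" by (rule Imp.IH(1)) (use Imp.prems in auto)
  moreover have "ssub s G = ssub s' G" by (rule Imp.IH(2)) (use Imp.prems in auto)
  ultimately show ?case by simp
qed auto

lemma substt_tsub: "substt v s t = tsub (Var(v := s)) t"
  by (induction t) auto

lemma subst_ssub: "subst v s F = ssub (Var(v := s)) F"
proof (induction F)
  case (All w F)
  have e1: "Var(v := Var v) = Var" by (rule ext) simp
  show ?case
  proof (cases "w = v")
    case True
    have e0: "(Var(v := s))(v := Var v) = Var" by (rule ext) simp
    show ?thesis using True by (simp only: subst.simps ssub.simps e0 ssub_Var) simp
  next
    case False
    have e2: "(Var(v := s))(w := Var w) = Var(v := s)" using False by (intro ext) simp
    show ?thesis using False All by (simp only: subst.simps ssub.simps e2 if_False)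
  qed
next
  case (Ex w F)
  have e1: "Var(v := Var v) = Var" by (rule ext) simp
  show ?case
  proof (cases "w = v")
    case True
    have e0: "(Var(v := s))(v := Var v) = Var" by (rule ext) simp
    show ?thesis using True by (simp only: subst.simps ssub.simps e0 ssub_Var) simp
  next
    case False
    have e2: "(Var(v := s))(w := Var w) = Var(v := s)" using False by (intro ext) simp
    show ?thesis using False Ex by (simp only: subst.simps ssub.simps e2 if_False)
  qed
qed (auto simp: substt_tsub fun_upd_def)

lemma tsub_tsub: "tsub s (tsub t x) = tsub (\<lambda>v. tsub s (t v)) x"
  by (induction x) auto

definition capfree :: "(var \<Rightarrow> 'p trm) \<Rightarrow> 'p form \<Rightarrow> bool" where
  "capfree t F = (\<forall>v. t v \<noteq> Var v \<longrightarrow> tvars (t v) \<inter> bvars F = {})"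

lemma ssub_ssub: "capfree t F \<Longrightarrow> ssub s (ssub t F) = ssub (\<lambda>v. tsub s (t v)) F"
proof (induction F arbitrary: s t)
  case (All w F)
  have cf: "capfree (t(w := Var w)) F" using All.prems by (auto simp: capfree_def)
  have "ssub (s(w := Var w)) (ssub (t(w := Var w)) F)
      = ssub (\<lambda>v. tsub (s(w := Var w)) ((t(w := Var w)) v)) F" using All.IH[OF cf] .
  also have "\<dots> = ssub ((\<lambda>v. tsub s (t v))(w := Var w)) F"
  proof (rule ssub_cong)
    fix v assume "v \<in> fv F"
    show "tsub (s(w := Var w)) ((t(w := Var w)) v) = ((\<lambda>v. tsub s (t v))(w := Var w)) v"
    proof (cases "v = w")
      case False
      have "w \<notin> tvars (t v)"
        using All.prems False by (cases "t v = Var v") (auto simp: capfree_def)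
      then show ?thesis using False by (auto intro!: tsub_cong)
    qed simp
  qed
  finally show ?case by simp
next
  case (Ex w F)
  have cf: "capfree (t(w := Var w)) F" using Ex.prems by (auto simp: capfree_def)
  have "ssub (s(w := Var w)) (ssub (t(w := Var w)) F)
      = ssub (\<lambda>v. tsub (s(w := Var w)) ((t(w := Var w)) v)) F" using Ex.IH[OF cf] .
  also have "\<dots> = ssub ((\<lambda>v. tsub s (t v))(w := Var w)) F"
  proof (rule ssub_cong)
    fix v assume "v \<in> fv F"
    show "tsub (s(w := Var w)) ((t(w := Var w)) v) = ((\<lambda>v. tsub s (t v))(w := Var w)) v"
    proof (cases "v = w")
      case False
      have "w \<notin> tvars (t v)"
        using Ex.prems False by (cases "t v = Var v") (auto simp: capfree_def)
      then show ?thesis using False by (auto intro!: tsub_cong)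
    qed simp
  qed
  finally show ?case by simp
next
  case (And F G)
  have "capfree t F" "capfree t G" using And.prems by (auto simp: capfree_def)
  then show ?case using And.IH by simp
next
  case (Or F G)
  have "capfree t F" "capfree t G" using Or.prems by (auto simp: capfree_def)
  then show ?case using Or.IH by simp
next
  case (Imp F G)
  have "capfree t F" "capfree t G" using Imp.prems by (auto simp: capfree_def)
  then show ?case using Imp.IH by simp
qed (auto simp: tsub_tsub)

lemma bvars_ssub[simp]: "bvars (ssub s F) = bvars F"
  by (induction F arbitrary: s) auto

lemma tvars_tsub: "tvars (tsub s t) = (\<Union>v\<in>tvars t. tvars (s v))"
  by (induction t) auto

lemma fv_ssub: "fv (ssub s F) \<subseteq> (\<Union>v\<in>fv F. tvars (s v))"
proof (induction F arbitrary: s)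
  case (All w F)
  have "fv (ssub (s(w := Var w)) F) \<subseteq> (\<Union>v\<in>fv F. tvars ((s(w := Var w)) v))" by (rule All.IH)
  also have "\<dots> \<subseteq> insert w (\<Union>v\<in>fv F - {w}. tvars (s v))" by (auto split: if_splits)
  finally show ?case by auto
next
  case (Ex w F)
  have "fv (ssub (s(w := Var w)) F) \<subseteq> (\<Union>v\<in>fv F. tvars ((s(w := Var w)) v))" by (rule Ex.IH)
  also have "\<dots> \<subseteq> insert w (\<Union>v\<in>fv F - {w}. tvars (s v))" by (auto split: if_splits)
  finally show ?case by auto
next
  case (And F G) show ?case using And.IH[of s] by auto
next
  case (Or F G) show ?case using Or.IH[of s] by auto
next
  case (Imp F G) show ?case using Imp.IH[of s] by auto
qed (auto simp: tvars_tsub)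

lemma freefor_Pre[simp]: "freefor (Pre p) v F"
  by (induction F) auto

lemma freefor_Var_self[simp]: "freefor (Var v) v F"
  by (induction F) auto

lemma subst_self[simp]: "subst v (Var v) F = F"
  by (simp add: subst_ssub)

lemma alls_Nil[simp]: "alls [] F = F" and alls_Cons[simp]: "alls (v # vs) F = All v (alls vs F)"
  by (auto simp: alls_def)
lemma exs_Nil[simp]: "exs [] F = F" and exs_Cons[simp]: "exs (v # vs) F = Ex v (exs vs F)"
  by (auto simp: exs_def)
lemma conjs_Nil[simp]: "conjs [] = Top" and conjs_Cons[simp]: "conjs (F # Fs) = And F (conjs Fs)"
  by (auto simp: conjs_def)
lemma disjs_Nil[simp]: "disjs [] = Bot" and disjs_Cons[simp]: "disjs (F # Fs) = Or F (disjs Fs)"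
  by (auto simp: disjs_def)

lemma alls_append[simp]: "alls (xs @ ys) F = alls xs (alls ys F)"
  by (induction xs) auto
lemma exs_append[simp]: "exs (xs @ ys) F = exs xs (exs ys F)"
  by (induction xs) auto

lemma fv_alls[simp]: "fv (alls vs F) = fv F - set vs"
  by (induction vs) auto
lemma fv_exs[simp]: "fv (exs vs F) = fv F - set vs"
  by (induction vs) auto
lemma fv_conjs[simp]: "fv (conjs Fs) = (\<Union>F\<in>set Fs. fv F)"
  by (induction Fs) (auto simp: Top_def)
lemma fv_Top[simp]: "fv Top = {}" by (simp add: Top_def)
lemma fv_Neg[simp]: "fv (Neg F) = fv F" by (simp add: Neg_def)
lemma fv_Iff[simp]: "fv (Iff F G) = fv F \<union> fv G" by (auto simp: Iff_def)

lemma bvars_alls[simp]: "bvars (alls vs F) = set vs \<union> bvars F"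
  by (induction vs) auto
lemma bvars_exs[simp]: "bvars (exs vs F) = set vs \<union> bvars F"
  by (induction vs) auto

lemma subst_alls: "v \<notin> set vs \<Longrightarrow> subst v t (alls vs F) = alls vs (subst v t F)"
  by (induction vs) auto
lemma subst_exs: "v \<notin> set vs \<Longrightarrow> subst v t (exs vs F) = exs vs (subst v t F)"
  by (induction vs) auto

lemma ssub_alls: "(\<forall>v\<in>set vs. s v = Var v) \<Longrightarrow> ssub s (alls vs F) = alls vs (ssub s F)"
  by (induction vs) (auto simp: fun_upd_idem)
lemma ssub_exs: "(\<forall>v\<in>set vs. s v = Var v) \<Longrightarrow> ssub s (exs vs F) = exs vs (ssub s F)"
  by (induction vs) (auto simp: fun_upd_idem)

lemma ssub_Top[simp]: "ssub s Top = Top" by (simp add: Top_def)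
lemma ssub_Neg[simp]: "ssub s (Neg F) = Neg (ssub s F)" by (simp add: Neg_def)
lemma ssub_Iff[simp]: "ssub s (Iff F G) = Iff (ssub s F) (ssub s G)" by (simp add: Iff_def)
lemma ssub_conjs[simp]: "ssub s (conjs Fs) = conjs (map (ssub s) Fs)"
  by (induction Fs) auto
lemma ssub_lexless[simp]: "ssub s (lexless xs us) = lexless (map (tsub s) xs) (map (tsub s) us)"
  by (induction xs us rule: lexless.induct) auto
lemma ssub_tupeq: "ssub s (tupeq xs ys) = conjs (map2 (\<lambda>a b. Cmp Eq (s a) (s b)) xs ys)"
  by (auto simp: tupeq_def intro!: arg_cong[where f=conjs] map_cong)

lemma bvars_conjs[simp]: "bvars (conjs Fs) = (\<Union>F\<in>set Fs. bvars F)"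
  by (induction Fs) (auto simp: Top_def)
lemma bvars_lexless[simp]: "bvars (lexless xs us) = {}"
  by (induction xs us rule: lexless.induct) auto
lemma fv_lexless: "fv (lexless xs us) \<subseteq> \<Union>(tvars ` set xs) \<union> \<Union>(tvars ` set us)"
  by (induction xs us rule: lexless.induct) auto

lemma itrm_gtrm: "itrm num t \<Longrightarrow> gtrm num t"
  by (cases t) (auto simp: gtrm_def)

lemma itrm_tsub: "itrm num t \<Longrightarrow> (\<forall>v. sortok num v (s v)) \<Longrightarrow> itrm num (tsub s t)"
  by (induction t) (auto simp: sortok_def split: if_splits)

lemma gtrm_tsub: "gtrm num t \<Longrightarrow> (\<forall>v. sortok num v (s v)) \<Longrightarrow> gtrm num (tsub s t)"
proof -
  assume g: "gtrm num t" and s: "\<forall>v. sortok num v (s v)"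
  consider (V) v where "t = Var v" | (P) p where "t = Pre p" | (I) "itrm num t"
    using g by (cases t) (auto simp: gtrm_def)
  then show ?thesis
  proof cases
    case V
    have "sortok num v (s v)" using s by blast
    then show ?thesis using V by (auto simp: sortok_def itrm_gtrm split: if_splits)
  next
    case P then show ?thesis by (simp add: gtrm_def)
  next
    case I then show ?thesis using itrm_gtrm itrm_tsub s by blast
  qed
qed

lemma gtrm_Var[simp]: "gtrm num (Var v)" and gtrm_Pre[simp]: "gtrm num (Pre p)"
  by (auto simp: gtrm_def)

lemma sortok_upd: "(\<forall>v. sortok num v (s v)) \<Longrightarrow> (\<forall>v. sortok num v ((s(w := Var w)) v))"
  by (auto simp: sortok_def)

lemma wf_ssub: "wf num F \<Longrightarrow> (\<forall>v. sortok num v (s v)) \<Longrightarrow> wf num (ssub s F)"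
proof (induction F arbitrary: s)
  case (All w F) then show ?case using sortok_upd[of num s w] by auto
next
  case (Ex w F) then show ?case using sortok_upd[of num s w] by auto
qed (auto simp: gtrm_tsub itrm_tsub)

lemma noStart_ssub[simp]: "noStart (ssub s F) = noStart F"
  by (induction F arbitrary: s) auto
lemma base_ssub[simp]: "base (ssub s F) = base F"
  by (induction F arbitrary: s) auto
lemma base_noStart: "base F \<Longrightarrow> noStart F"
  by (induction F) auto
lemma nopa_noStart: "nopa F \<Longrightarrow> noStart F"
  by (induction F) auto

lemma wf_alls[simp]: "wf num (alls vs F) = wf num F" by (induction vs) auto
lemma wf_exs[simp]: "wf num (exs vs F) = wf num F" by (induction vs) auto
lemma wf_conjs[simp]: "wf num (conjs Fs) = (\<forall>F\<in>set Fs. wf num F)"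
  by (induction Fs) (auto simp: Top_def)
lemma wf_disjs[simp]: "wf num (disjs Fs) = (\<forall>F\<in>set Fs. wf num F)"
  by (induction Fs) auto
lemma base_alls[simp]: "base (alls vs F) = base F" by (induction vs) auto
lemma base_exs[simp]: "base (exs vs F) = base F" by (induction vs) auto
lemma base_conjs[simp]: "base (conjs Fs) = (\<forall>F\<in>set Fs. base F)"
  by (induction Fs) (auto simp: Top_def)
lemma base_disjs[simp]: "base (disjs Fs) = (\<forall>F\<in>set Fs. base F)"
  by (induction Fs) auto
lemma noStart_alls[simp]: "noStart (alls vs F) = noStart F" by (induction vs) auto
lemma noStart_exs[simp]: "noStart (exs vs F) = noStart F" by (induction vs) auto
lemma noStart_conjs[simp]: "noStart (conjs Fs) = (\<forall>F\<in>set Fs. noStart F)"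
  by (induction Fs) (auto simp: Top_def)
lemma wf_Top[simp]: "wf num Top" by (simp add: Top_def)
lemma base_Top[simp]: "base Top" by (simp add: Top_def)
lemma nopa_Top[simp]: "nopa Top" by (simp add: Top_def)
lemma noStart_Top[simp]: "noStart Top" by (simp add: Top_def)
lemma wf_Neg[simp]: "wf num (Neg F) = wf num F" by (simp add: Neg_def)
lemma base_Neg[simp]: "base (Neg F) = base F" by (simp add: Neg_def)
lemma nopa_Neg[simp]: "nopa (Neg F) = nopa F" by (simp add: Neg_def)
lemma noStart_Neg[simp]: "noStart (Neg F) = noStart F" by (simp add: Neg_def)
lemma wf_Iff[simp]: "wf num (Iff F G) = (wf num F \<and> wf num G)" by (auto simp: Iff_def)
lemma noStart_Iff[simp]: "noStart (Iff F G) = (noStart F \<and> noStart G)" by (auto simp: Iff_def)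
lemma base_Iff[simp]: "base (Iff F G) = (base F \<and> base G)" by (auto simp: Iff_def)
lemma nopa_conjs[simp]: "nopa (conjs Fs) = (\<forall>F\<in>set Fs. nopa F)"
  by (induction Fs) (auto simp: Top_def)

lemma lexless_props[simp]:
  "base (lexless xs us)" "noStart (lexless xs us)" "nopa (lexless xs us)"
  by (induction xs us rule: lexless.induct) auto
lemma wf_lexless: "(\<forall>t\<in>set xs. gtrm num t) \<Longrightarrow> (\<forall>t\<in>set us. gtrm num t) \<Longrightarrow> wf num (lexless xs us)"
  by (induction xs us rule: lexless.induct) auto
lemma tupeq_props[simp]: "base (tupeq xs ys)" "noStart (tupeq xs ys)" "wf num (tupeq xs ys)"
  by (auto simp: tupeq_def gtrm_def dest!: set_zip_leftD set_zip_rightD)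

section \<open>renaming\<close>

definition ren :: "var list \<Rightarrow> var list \<Rightarrow> var \<Rightarrow> 'p trm" where
  "ren X Y v = (case map_of (zip X Y) v of Some y \<Rightarrow> Var y | None \<Rightarrow> Var v)"

lemma ren_Nil[simp]: "ren [] Y = Var" by (rule ext) (simp add: ren_def)

lemma renameF_Cons: "renameF (x # X) (y # Y) G = subst x (Var y) (renameF X Y G)"
  by (simp add: renameF_def)

lemma renameF_ssub:
  "length X = length Y \<Longrightarrow> distinct X \<Longrightarrow> set Y \<inter> set X = {} \<Longrightarrow> set Y \<inter> bvars G = {}
   \<Longrightarrow> renameF X Y G = ssub (ren X Y) G"
proof (induction X Y rule: list_induct2)
  case Nil then show ?case by (simp add: renameF_def)
next
  case (Cons x X y Y)
  have cf: "capfree (ren X Y) G"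
    using Cons.prems by (auto simp: capfree_def ren_def split: option.splits dest!: map_of_SomeD set_zip_rightD)
  have "renameF (x # X) (y # Y) G = ssub (Var(x := Var y)) (ssub (ren X Y) G)"
    using Cons by (simp add: renameF_Cons subst_ssub)
  also have "\<dots> = ssub (\<lambda>v. tsub (Var(x := Var y)) (ren X Y v)) G" by (rule ssub_ssub[OF cf])
  also have "\<dots> = ssub (ren (x # X) (y # Y)) G"
  proof (rule arg_cong[where f="\<lambda>s. ssub s G"], rule ext)
    fix v
    show "tsub (Var(x := Var y)) (ren X Y v) = ren (x # X) (y # Y) v"
    proof (cases "map_of (zip X Y) v")
      case None
      then show ?thesis using Cons.prems by (auto simp: ren_def)
    next
      case (Some z)
      then have "z \<in> set Y" "v \<in> set X" by (auto dest: map_of_SomeD set_zip_rightD set_zip_leftD)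
      then show ?thesis using Some Cons.prems by (auto simp: ren_def)
    qed
  qed
  finally show ?case .
qed

lemma map_of_zip_map:
  "distinct X \<Longrightarrow> length X = length Y \<Longrightarrow> map (\<lambda>v. the (map_of (zip X Y) v)) X = Y"
  by (rule nth_equalityI) (auto simp: map_of_zip_nth)

lemma ren_map: "distinct X \<Longrightarrow> length X = length Y \<Longrightarrow> map (ren X Y) X = map Var Y"
  by (rule nth_equalityI) (auto simp: ren_def map_of_zip_nth)

lemma ren_out: "v \<notin> set X \<Longrightarrow> ren X Y v = Var v"
  by (auto simp: ren_def split: option.splits dest!: map_of_SomeD set_zip_leftD)

lemma ren_sortok: "\<forall>y\<in>set Y. isG y \<Longrightarrow> \<forall>x\<in>set X. isG x \<Longrightarrow> sortok num v (ren X Y v)"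
proof (cases "map_of (zip X Y) v")
  case (Some y)
  assume "\<forall>y\<in>set Y. isG y" "\<forall>x\<in>set X. isG x"
  moreover have "y \<in> set Y" "v \<in> set X" using Some by (auto dest: map_of_SomeD set_zip_rightD set_zip_leftD)
  ultimately show ?thesis using Some by (auto simp: ren_def sortok_def)
qed (auto simp: ren_def sortok_def)

lemma fv_ren: fixes G :: "'p form" shows "fv (ssub (ren X Y) G) \<subseteq> fv G \<union> set Y"
proof
  fix x assume x: "x \<in> fv (ssub (ren X Y) G)"
  have "x \<in> (\<Union>v\<in>fv G. tvars (ren X Y v :: 'p trm))" using subsetD[OF fv_ssub[of "ren X Y" G] x] .
  then obtain v where v: "v \<in> fv G" "x \<in> tvars (ren X Y v :: 'p trm)" by (rule UN_E)
  show "x \<in> fv G \<union> set Y"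
  proof (cases "map_of (zip X Y) v")
    case None
    then have "ren X Y v = (Var v :: 'p trm)" by (simp add: ren_def)
    then have "x = v" using v(2) by simp
    then show ?thesis using v(1) by simp
  next
    case (Some y)
    then have "ren X Y v = (Var y :: 'p trm)" by (simp add: ren_def)
    then have "x = y" using v(2) by simp
    moreover have "y \<in> set Y" using Some by (auto dest: map_of_SomeD set_zip_rightD)
    ultimately show ?thesis by simp
  qed
qed

lemma finite_tvars[simp]: "finite (tvars t)" by (induction t) auto
lemma finite_allvars[simp]: "finite (allvars F)" by (induction F) auto
lemma fv_allvars: "fv F \<subseteq> allvars F" by (induction F) auto
lemma bvars_allvars: "bvars F \<subseteq> allvars F" by (induction F) auto

lemma freshb_gt: "v \<in> allvars G \<union> set XV \<Longrightarrow> vidx v < freshb G XV"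
proof -
  assume v: "v \<in> allvars G \<union> set XV"
  have fin: "finite (insert 0 (vidx ` (allvars G \<union> set XV)))" by simp
  have "vidx v \<le> Max (insert 0 (vidx ` (allvars G \<union> set XV)))"
    using v by (intro Max_ge[OF fin]) auto
  then show ?thesis by (simp add: freshb_def)
qed

lemma base_subst[simp]: "base (subst v t F) = base F" by (simp add: subst_ssub)
lemma noStart_subst[simp]: "noStart (subst v t F) = noStart F" by (simp add: subst_ssub)

lemma base_foldr_subst: "base (foldr (\<lambda>(x, y) H. subst x (Var y) H) ps G) = base G"
  by (induction ps) (auto simp: case_prod_beta)
lemma base_renameF[simp]: "base (renameF X Y G) = base G"
  unfolding renameF_def by (rule base_foldr_subst)

lemma base_atleastF: "base G \<Longrightarrow> base (atleastF num X G r)"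
  by (auto simp: atleastF_def Let_def tupeq_def case_prod_beta)
lemma base_atmostF: "base G \<Longrightarrow> base (atmostF num X G r)"
  by (auto simp: atmostF_def Let_def tupeq_def case_prod_beta)

section \<open>the translation\<close>

definition UTof :: "var list \<Rightarrow> var list \<Rightarrow> 'p form \<Rightarrow> var list" where
  "UTof X V G = map (\<lambda>j. GV (freshb G (X @ V) + j)) [0..<length X]"

definition Kof :: "var list \<Rightarrow> var list \<Rightarrow> 'p form \<Rightarrow> 'p form" where
  "Kof X V G = And (Neg (lexless (map Var (UTof X V G @ V)) (map Var (X @ V))))
                   (And (renameF X (UTof X V G) G) G)"

fun tr :: "'p form \<Rightarrow> 'p form" where
  "tr (Start X V G xs vs n) = Atleast (UTof X V G) (X @ V) (Kof X V G) (xs @ vs) n"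
| "tr (And F G) = And (tr F) (tr G)"
| "tr (Or F G) = Or (tr F) (tr G)"
| "tr (Imp F G) = Imp (tr F) (tr G)"
| "tr (All v F) = All v (tr F)"
| "tr (Ex v F) = Ex v (tr F)"
| "tr Bot = Bot"
| "tr (Pred p ts) = Pred p ts"
| "tr (Cmp c a b) = Cmp c a b"
| "tr (Atleast X V G ts r) = Atleast X V G ts r"
| "tr (Atmost X V G ts r) = Atmost X V G ts r"

lemma tr_noStart: "noStart F \<Longrightarrow> tr F = F" by (induction F) auto
lemma noStart_tr[simp]: "noStart (tr F)" by (induction F) auto
lemma fv_tr[simp]: "fv (tr F) = fv F" by (induction F) auto
lemma tr_subst[simp]: "tr (subst v t F) = subst v t (tr F)" by (induction F) auto
lemma freefor_tr[simp]: "freefor t v (tr F) = freefor t v F" by (induction F) auto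
lemma tr_Neg[simp]: "tr (Neg F) = Neg (tr F)" by (simp add: Neg_def)
lemma tr_Iff[simp]: "tr (Iff F G) = Iff (tr F) (tr G)" by (simp add: Iff_def)
lemma tr_alls[simp]: "tr (alls vs F) = alls vs (tr F)" by (induction vs) auto
lemma tr_exs[simp]: "tr (exs vs F) = exs vs (tr F)" by (induction vs) auto

lemma UT_props:
  assumes "aggok X V G"
  shows "length (UTof X V G) = length X" "distinct (UTof X V G @ X @ V)"
    "\<forall>u\<in>set (UTof X V G). isG u" "set (UTof X V G) \<inter> allvars G = {}"
proof -
  let ?b = "freshb G (X @ V)"
  show "length (UTof X V G) = length X" by (simp add: UTof_def)
  have fr: "\<And>u. u \<in> set (UTof X V G) \<Longrightarrow> ?b \<le> vidx u" by (auto simp: UTof_def)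
  have lt: "\<And>v. v \<in> allvars G \<union> set (X @ V) \<Longrightarrow> vidx v < ?b" by (rule freshb_gt)
  have d1: "distinct (UTof X V G)" by (auto simp: UTof_def distinct_map inj_on_def)
  have d2: "distinct (X @ V)" using assms by (simp add: aggok_def)
  have dis: "set (UTof X V G) \<inter> set (X @ V) = {}"
  proof (rule ccontr)
    assume "set (UTof X V G) \<inter> set (X @ V) \<noteq> {}"
    then obtain u where "u \<in> set (UTof X V G)" "u \<in> set (X @ V)" by blast
    then show False using fr lt by fastforce
  qed
  show "distinct (UTof X V G @ X @ V)" using d1 d2 dis by auto
  show "\<forall>u\<in>set (UTof X V G). isG u" by (auto simp: UTof_def)
  show "set (UTof X V G) \<inter> allvars G = {}"
  proof (rule ccontr)
    assume "set (UTof X V G) \<inter> allvars G \<noteq> {}"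
    then obtain u where "u \<in> set (UTof X V G)" "u \<in> allvars G" by blast
    then show False using fr lt by fastforce
  qed
qed

lemma renameF_UT:
  assumes "aggok X V G"
  shows "renameF X (UTof X V G) G = ssub (ren X (UTof X V G)) G"
proof (rule renameF_ssub)
  note u = UT_props[OF assms]
  show "length X = length (UTof X V G)" using u by simp
  show "distinct X" using assms by (simp add: aggok_def)
  show "set (UTof X V G) \<inter> set X = {}" using u(2) by auto
  show "set (UTof X V G) \<inter> bvars G = {}" using u(4) bvars_allvars by blast
qed

lemma K_aggwf:
  assumes "aggwf num X V G"
  shows "aggwf num (UTof X V G) (X @ V) (Kof X V G)"
proof -
  have ag: "aggok X V G" and wG: "wf num G" using assms by (auto simp: aggwf_def)
  note u = UT_props[OF ag]
  have XVG: "\<forall>v\<in>set (X @ V). isG v" "base G" "fv G \<subseteq> set X \<union> set V" using ag by (auto simp: aggok_def)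
  have r: "renameF X (UTof X V G) G = ssub (ren X (UTof X V G)) G" by (rule renameF_UT[OF ag])
  have fvK: "fv (Kof X V G) \<subseteq> set (UTof X V G) \<union> set (X @ V)"
  proof -
    have "fv (lexless (map Var (UTof X V G @ V)) (map Var (X @ V)) :: 'a form)
        \<subseteq> set (UTof X V G) \<union> set (X @ V)"
      using fv_lexless[of "map Var (UTof X V G @ V)" "map Var (X @ V)"] by auto
    moreover have "fv (ssub (ren X (UTof X V G)) G) \<subseteq> set (UTof X V G) \<union> set (X @ V)"
      using fv_ren[of X "UTof X V G" G] XVG(3) by auto
    ultimately show ?thesis using XVG(3) by (auto simp: Kof_def r)
  qed
  have wK: "wf num (Kof X V G)"
    unfolding Kof_def r using XVG u wG
    by (auto intro!: wf_lexless wf_ssub ren_sortok)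
  have bK: "base (Kof X V G)" unfolding Kof_def using XVG by simp
  show ?thesis unfolding aggwf_def aggok_def using u XVG fvK wK bK by auto
qed

lemma wf_tr: "wf num F \<Longrightarrow> wf num (tr F)"
proof (induction F)
  case (Start X V G xs vs n)
  have "aggwf num X V G" using Start.prems by (simp add: aggwf_def)
  then have "aggwf num (UTof X V G) (X @ V) (Kof X V G)" by (rule K_aggwf)
  then show ?case using Start.prems by (auto simp: aggwf_def itrm_gtrm)
qed auto

lemma sig1_tr: "sig2 num F \<Longrightarrow> sig1 num (tr F)"
  by (simp add: sig1_def sig2_def wf_tr)

lemma sig1_sig2: "sig1 num F \<Longrightarrow> sig2 num F"
  by (simp add: sig1_def sig2_def)

lemma ok_tr: "ok (sig2 num) \<Gamma> F \<Longrightarrow> ok (sig1 num) (tr ` \<Gamma>) (tr F)"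
  by (auto simp: ok_def sig1_tr)

lemma tr_HTax: "F \<in> HTax num \<Longrightarrow> tr F \<in> HTax num"
proof -
  assume "F \<in> HTax num"
  then consider (a) A B where "F = Or A (Or (Imp A B) (Neg B))"
    | (b) n A where "F = Ex (GV n) (Imp A (All (GV n) A))"
    | (c) "F \<in> Std num" | (d) "F \<in> Defs num"
    unfolding HTax_def by blast
  then show ?thesis
  proof cases
    case a then show ?thesis by (auto simp: HTax_def)
  next
    case b then show ?thesis by (auto simp: HTax_def)
  next
    case c
    then have "nopa F" by (simp add: Std_def)
    then have "tr F = F" by (intro tr_noStart nopa_noStart)
    then show ?thesis using c by (simp add: HTax_def)
  next
    case d
    have h: "\<And>X G r. base G \<Longrightarrow> noStart (atleastF num X G r) \<and> noStart (atmostF num X G r)"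
      using base_noStart base_atleastF base_atmostF by blast
    have "noStart F" using d h by (auto simp: Defs_def aggwf_def aggok_def)
    then have "tr F = F" by (rule tr_noStart)
    then show ?thesis using d by (simp add: HTax_def)
  qed
qed

abbreviation D :: "(int \<Rightarrow> 'p::linorder) \<Rightarrow> 'p form set \<Rightarrow> 'p form \<Rightarrow> bool" where
  "D num \<Gamma> F \<equiv> deriv num (sig1 num) (HTax num) \<Gamma> F"

lemma translate:
  assumes "deriv num (sig2 num) (HTax num \<union> D0 num) \<Gamma> F"
    and d0: "\<forall>F\<in>D0 num. D num {} (tr F)"
  shows "D num (tr ` \<Gamma>) (tr F)"
  using assms(1)
proof (induction rule: deriv.induct)
  case (ax F \<Gamma>)
  note okt = ok_tr[OF ax(2)]
  show ?case
  proof (cases "F \<in> HTax num")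
    case True
    then show ?thesis using okt by (intro deriv.ax tr_HTax)
  next
    case False
    then have "F \<in> D0 num" using ax(1) by blast
    then have "D num {} (tr F)" using d0 by blast
    then show ?thesis by (rule deriv.weak) (use okt in auto)
  qed
next
  case (hyp F \<Gamma>)
  show ?case using imageI[OF hyp(1), of tr] ok_tr[OF hyp(2)] by (rule deriv.hyp)
next
  case (weak \<Gamma> F \<Delta>)
  show ?case using weak.IH image_mono[OF weak(2)] ok_tr[OF weak(3)] by (rule deriv.weak)
next
  case (botE \<Gamma> F)
  have "D num (tr ` \<Gamma>) Bot" using botE.IH by simp
  then show ?case using ok_tr[OF botE(2)] by (rule deriv.botE)
next
  case (andI \<Gamma> F G)
  show ?case using andI.IH ok_tr[OF andI(3)] by (simp add: deriv.andI)
next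
  case (andE1 \<Gamma> F G)
  have "D num (tr ` \<Gamma>) (And (tr F) (tr G))" using andE1.IH by simp
  then show ?case using ok_tr[OF andE1(2)] by (rule deriv.andE1)
next
  case (andE2 \<Gamma> F G)
  have "D num (tr ` \<Gamma>) (And (tr F) (tr G))" using andE2.IH by simp
  then show ?case using ok_tr[OF andE2(2)] by (rule deriv.andE2)
next
  case (orI1 \<Gamma> F G)
  have "ok (sig1 num) (tr ` \<Gamma>) (Or (tr F) (tr G))" using ok_tr[OF orI1(2)] by simp
  then show ?case using orI1.IH deriv.orI1 by simp
next
  case (orI2 \<Gamma> G F)
  have "ok (sig1 num) (tr ` \<Gamma>) (Or (tr F) (tr G))" using ok_tr[OF orI2(2)] by simp
  then show ?case using orI2.IH deriv.orI2 by simp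
next
  case (orE \<Gamma> F G H)
  have a: "D num (tr ` \<Gamma>) (Or (tr F) (tr G))" using orE.IH(1) by simp
  have b: "D num (insert (tr F) (tr ` \<Gamma>)) (tr H)" using orE.IH(2) by simp
  have c: "D num (insert (tr G) (tr ` \<Gamma>)) (tr H)" using orE.IH(3) by simp
  show ?case using a b c ok_tr[OF orE(4)] by (rule deriv.orE)
next
  case (impI F \<Gamma> G)
  have b: "D num (insert (tr F) (tr ` \<Gamma>)) (tr G)" using impI.IH by simp
  have "ok (sig1 num) (tr ` \<Gamma>) (Imp (tr F) (tr G))" using ok_tr[OF impI(2)] by simp
  with b have "D num (tr ` \<Gamma>) (Imp (tr F) (tr G))" by (rule deriv.impI)
  then show ?case by simp
next
  case (impE \<Gamma> F G)
  have b: "D num (tr ` \<Gamma>) (Imp (tr F) (tr G))" using impE.IH(2) by simp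
  show ?case using impE.IH(1) b ok_tr[OF impE(3)] by (rule deriv.impE)
next
  case (allI \<Gamma> F v)
  have v: "v \<notin> \<Union> (fv ` tr ` \<Gamma>)" using allI(2) by simp
  have "ok (sig1 num) (tr ` \<Gamma>) (All v (tr F))" using ok_tr[OF allI(3)] by simp
  with allI.IH v have "D num (tr ` \<Gamma>) (All v (tr F))" by (rule deriv.allI)
  then show ?case by simp
next
  case (allE \<Gamma> v F t)
  have a: "D num (tr ` \<Gamma>) (All v (tr F))" using allE.IH by simp
  have f: "freefor t v (tr F)" using allE(3) by simp
  have o: "ok (sig1 num) (tr ` \<Gamma>) (subst v t (tr F))" using ok_tr[OF allE(4)] by simp
  have "D num (tr ` \<Gamma>) (subst v t (tr F))" using a allE(2) f o by (rule deriv.allE)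
  then show ?case by simp
next
  case (exI \<Gamma> v t F)
  have a: "D num (tr ` \<Gamma>) (subst v t (tr F))" using exI.IH by simp
  have f: "freefor t v (tr F)" using exI(3) by simp
  have o: "ok (sig1 num) (tr ` \<Gamma>) (Ex v (tr F))" using ok_tr[OF exI(4)] by simp
  have "D num (tr ` \<Gamma>) (Ex v (tr F))" using a exI(2) f o by (rule deriv.exI)
  then show ?case by simp
next
  case (exE \<Gamma> v F G)
  have a: "D num (tr ` \<Gamma>) (Ex v (tr F))" using exE.IH(1) by simp
  have b: "D num (insert (tr F) (tr ` \<Gamma>)) (tr G)" using exE.IH(2) by simp
  have v: "v \<notin> fv (tr G) \<union> \<Union> (fv ` tr ` \<Gamma>)" using exE(3) by simp
  show ?case using a b v ok_tr[OF exE(4)] by (rule deriv.exE)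
next
  case (eqRefl \<Gamma> t)
  have "ok (sig1 num) (tr ` \<Gamma>) (Cmp Eq t t)" using ok_tr[OF eqRefl] by simp
  then show ?case using deriv.eqRefl by simp
next
  case (eqSubst \<Gamma> s t v F)
  have a: "D num (tr ` \<Gamma>) (Cmp Eq s t)" using eqSubst.IH(1) by simp
  have b: "D num (tr ` \<Gamma>) (subst v s (tr F))" using eqSubst.IH(2) by simp
  have f: "freefor s v (tr F)" "freefor t v (tr F)" using eqSubst(5,6) by simp_all
  have o: "ok (sig1 num) (tr ` \<Gamma>) (subst v t (tr F))" using ok_tr[OF eqSubst(7)] by simp
  have "D num (tr ` \<Gamma>) (subst v t (tr F))" using a b eqSubst(3,4) f o by (rule deriv.eqSubst)
  then show ?case by simp
next
  case (omegaG \<Gamma> n F)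
  have a: "\<And>p. D num (tr ` \<Gamma>) (subst (GV n) (Pre p) (tr F))" using omegaG.IH by simp
  have o: "ok (sig1 num) (tr ` \<Gamma>) (All (GV n) (tr F))" using ok_tr[OF omegaG(2)] by simp
  have "D num (tr ` \<Gamma>) (All (GV n) (tr F))" using a o by (rule deriv.omegaG)
  then show ?case by simp
next
  case (omegaI \<Gamma> n F)
  have a: "\<And>k. D num (tr ` \<Gamma>) (subst (IV n) (Pre (num k)) (tr F))" using omegaI.IH by simp
  have o: "ok (sig1 num) (tr ` \<Gamma>) (All (IV n) (tr F))" using ok_tr[OF omegaI(2)] by simp
  have "D num (tr ` \<Gamma>) (All (IV n) (tr F))" using a o by (rule deriv.omegaI)
  then show ?case by simp
qed

definition okG :: "(int \<Rightarrow> 'p) \<Rightarrow> 'p form set \<Rightarrow> bool" where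
  "okG num \<Gamma> = (finite \<Gamma> \<and> (\<forall>G\<in>\<Gamma>. sig1 num G))"

lemma deriv_ok: "deriv num L A \<Gamma> F \<Longrightarrow> ok L \<Gamma> F"
  by (induction rule: deriv.induct) auto

lemma D_okG: "D num \<Gamma> F \<Longrightarrow> okG num \<Gamma>"
  using deriv_ok[of num "sig1 num" "HTax num" \<Gamma> F] by (simp add: ok_def okG_def)
lemma D_sig1: "D num \<Gamma> F \<Longrightarrow> sig1 num F"
  using deriv_ok[of num "sig1 num" "HTax num" \<Gamma> F] by (simp add: ok_def)

lemma okI: "okG num \<Gamma> \<Longrightarrow> sig1 num F \<Longrightarrow> ok (sig1 num) \<Gamma> F"
  by (simp add: ok_def okG_def)

lemma sig1_simps[simp]:
  "sig1 num (And A B) = (sig1 num A \<and> sig1 num B)"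
  "sig1 num (Or A B) = (sig1 num A \<and> sig1 num B)"
  "sig1 num (Imp A B) = (sig1 num A \<and> sig1 num B)"
  "sig1 num (All v A) = sig1 num A"
  "sig1 num (Ex v A) = sig1 num A"
  "sig1 num Bot"
  "sig1 num Top"
  "sig1 num (Neg A) = sig1 num A"
  "sig1 num (Iff A B) = (sig1 num A \<and> sig1 num B)"
  "sig1 num (alls vs A) = sig1 num A"
  "sig1 num (exs vs A) = sig1 num A"
  "sig1 num (conjs Fs) = (\<forall>F\<in>set Fs. sig1 num F)"
  by (auto simp: sig1_def)

lemma okG_insert[simp]: "okG num (insert A \<Gamma>) = (sig1 num A \<and> okG num \<Gamma>)"
  by (auto simp: okG_def)
lemma okG_empty[simp]: "okG num {}" by (simp add: okG_def)

lemma hypI: "F \<in> \<Gamma> \<Longrightarrow> okG num \<Gamma> \<Longrightarrow> D num \<Gamma> F"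
  by (rule deriv.hyp) (auto simp: ok_def okG_def)

lemma weakI: "D num \<Gamma> F \<Longrightarrow> \<Gamma> \<subseteq> \<Delta> \<Longrightarrow> okG num \<Delta> \<Longrightarrow> D num \<Delta> F"
  by (rule deriv.weak) (auto intro: okI D_sig1)

lemma impI': "D num (insert A \<Gamma>) B \<Longrightarrow> okG num \<Gamma> \<Longrightarrow> D num \<Gamma> (Imp A B)"
proof -
  assume d: "D num (insert A \<Gamma>) B" and o: "okG num \<Gamma>"
  have "sig1 num A" using D_okG[OF d] by simp
  moreover have "sig1 num B" using D_sig1[OF d] .
  ultimately show ?thesis using d o by (intro deriv.impI okI) auto
qed

lemma impE': "D num \<Gamma> A \<Longrightarrow> D num \<Gamma> (Imp A B) \<Longrightarrow> D num \<Gamma> B"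
proof -
  assume a: "D num \<Gamma> A" and b: "D num \<Gamma> (Imp A B)"
  have "sig1 num B" using D_sig1[OF b] by simp
  then show ?thesis using a b D_okG[OF a] by (intro deriv.impE[OF a b] okI)
qed

lemma andI': "D num \<Gamma> A \<Longrightarrow> D num \<Gamma> B \<Longrightarrow> D num \<Gamma> (And A B)"
  by (rule deriv.andI) (auto intro!: okI dest: D_okG D_sig1)
lemma andE1': "D num \<Gamma> (And A B) \<Longrightarrow> D num \<Gamma> A"
proof -
  assume a: "D num \<Gamma> (And A B)"
  have "sig1 num A" using D_sig1[OF a] by simp
  then show ?thesis using a by (intro deriv.andE1[OF a] okI D_okG)
qed
lemma andE2': "D num \<Gamma> (And A B) \<Longrightarrow> D num \<Gamma> B"
proof -
  assume a: "D num \<Gamma> (And A B)"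
  have "sig1 num B" using D_sig1[OF a] by simp
  then show ?thesis using a by (intro deriv.andE2[OF a] okI D_okG)
qed
lemma botE': "D num \<Gamma> Bot \<Longrightarrow> sig1 num F \<Longrightarrow> D num \<Gamma> F"
  by (rule deriv.botE) (auto intro: okI dest: D_okG)

lemma TopI: "okG num \<Gamma> \<Longrightarrow> D num \<Gamma> Top"
  unfolding Top_def by (intro impI' hypI) auto

lemma iffI': "D num \<Gamma> (Imp A B) \<Longrightarrow> D num \<Gamma> (Imp B A) \<Longrightarrow> D num \<Gamma> (Iff A B)"
  unfolding Iff_def by (rule andI')
lemma iffD1': "D num \<Gamma> (Iff A B) \<Longrightarrow> D num \<Gamma> A \<Longrightarrow> D num \<Gamma> B"
  unfolding Iff_def by (meson andE1' impE')
lemma iffD2': "D num \<Gamma> (Iff A B) \<Longrightarrow> D num \<Gamma> B \<Longrightarrow> D num \<Gamma> A"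
  unfolding Iff_def by (meson andE2' impE')

lemma conjsI: "okG num \<Gamma> \<Longrightarrow> (\<And>F. F \<in> set Fs \<Longrightarrow> D num \<Gamma> F) \<Longrightarrow> D num \<Gamma> (conjs Fs)"
proof (induction Fs)
  case Nil then show ?case by (simp add: TopI)
next
  case (Cons F Fs) then show ?case by (simp add: andI')
qed

lemma conjsE: "D num \<Gamma> (conjs Fs) \<Longrightarrow> F \<in> set Fs \<Longrightarrow> D num \<Gamma> F"
proof (induction Fs)
  case Nil then show ?case by simp
next
  case (Cons G Fs)
  have a: "D num \<Gamma> (And G (conjs Fs))" using Cons.prems(1) by simp
  show ?case
  proof (cases "F = G")
    case True then show ?thesis using andE1'[OF a] by simp
  next
    case False then show ?thesis using Cons.IH[OF andE2'[OF a]] Cons.prems(2) by simp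
  qed
qed

section \<open>semantics of closed formulas and Std\<close>

lemma tval_cong: "(\<And>v. v \<in> tvars t \<Longrightarrow> e v = e' v) \<Longrightarrow> tval num e t = tval num e' t"
  by (induction t) auto

lemma sat_cong: "(\<And>v. v \<in> fv F \<Longrightarrow> e v = e' v) \<Longrightarrow> sat num e F = sat num e' F"
proof (induction F arbitrary: e e')
  case (Cmp c a b)
  have "tval num e a = tval num e' a" by (rule tval_cong) (use Cmp in auto)
  moreover have "tval num e b = tval num e' b" by (rule tval_cong) (use Cmp in auto)
  ultimately show ?case by simp
next
  case (And F G)
  have "sat num e F = sat num e' F" by (rule And.IH(1)) (use And.prems in auto)
  moreover have "sat num e G = sat num e' G" by (rule And.IH(2)) (use And.prems in auto)
  ultimately show ?case by simp
next
  case (Or F G)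
  have "sat num e F = sat num e' F" by (rule Or.IH(1)) (use Or.prems in auto)
  moreover have "sat num e G = sat num e' G" by (rule Or.IH(2)) (use Or.prems in auto)
  ultimately show ?case by simp
next
  case (Imp F G)
  have "sat num e F = sat num e' F" by (rule Imp.IH(1)) (use Imp.prems in auto)
  moreover have "sat num e G = sat num e' G" by (rule Imp.IH(2)) (use Imp.prems in auto)
  ultimately show ?case by simp
next
  case (All w F)
  have "\<And>p. sat num (e(w := p)) F = sat num (e'(w := p)) F"
    by (rule All.IH) (use All.prems in auto)
  then show ?case by simp
next
  case (Ex w F)
  have "\<And>p. sat num (e(w := p)) F = sat num (e'(w := p)) F"
    by (rule Ex.IH) (use Ex.prems in auto)
  then show ?case by simp
qed auto

lemma sat_closed: "fv F = {} \<Longrightarrow> sat num e F = sat num e' F"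
  by (rule sat_cong) auto

lemma stdI: "F \<in> Std num \<Longrightarrow> okG num \<Gamma> \<Longrightarrow> D num \<Gamma> F"
  by (rule deriv.ax) (auto simp: HTax_def Std_def ok_def okG_def sig1_def nopa_noStart)

lemma trueI: "okG num \<Gamma> \<Longrightarrow> wf num F \<Longrightarrow> nopa F \<Longrightarrow> fv F = {} \<Longrightarrow> sat num e F \<Longrightarrow> D num \<Gamma> F"
  by (rule stdI) (auto simp: Std_def intro: sat_closed[THEN iffD1])

lemma falseE: "D num \<Gamma> F \<Longrightarrow> nopa F \<Longrightarrow> fv F = {} \<Longrightarrow> \<not> sat num e F \<Longrightarrow> sig1 num G \<Longrightarrow> D num \<Gamma> G"
proof -
  assume d: "D num \<Gamma> F" and n: "nopa F" and f: "fv F = {}" and s: "\<not> sat num e F" and g: "sig1 num G"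
  have w: "wf num F" using D_sig1[OF d] by (simp add: sig1_def)
  have "\<forall>e'. sat num e' (Neg F)" using s sat_closed[OF f, of num e] by (auto simp: Neg_def)
  then have "D num \<Gamma> (Neg F)" using w n f D_okG[OF d] by (intro stdI) (auto simp: Std_def)
  then have "D num \<Gamma> Bot" using d unfolding Neg_def by (rule impE'[rotated])
  then show ?thesis using g by (rule botE')
qed

definition gi :: "var set \<Rightarrow> (var \<Rightarrow> 'p) \<Rightarrow> var \<Rightarrow> 'p trm" where
  "gi S c v = (if v \<in> S then Pre (c v) else Var v)"

definition gsort :: "(int \<Rightarrow> 'p) \<Rightarrow> var set \<Rightarrow> (var \<Rightarrow> 'p) \<Rightarrow> bool" where
  "gsort num S c = (\<forall>v\<in>S. \<not> isG v \<longrightarrow> (\<exists>k. c v = num k))"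

lemma capfree_gi[simp]: "capfree (gi S c) F"
  by (auto simp: capfree_def gi_def)

lemma capfree_upd_Pre[simp]: "capfree (Var(v := Pre p)) F"
  by (auto simp: capfree_def)

lemma sortok_gi: "gsort num S c \<Longrightarrow> \<forall>v. sortok num v (gi S c v)"
  by (auto simp: gsort_def gi_def sortok_def)

lemma sig1_ssub_gi: "sig1 num F \<Longrightarrow> gsort num S c \<Longrightarrow> sig1 num (ssub (gi S c) F)"
  by (auto simp: sig1_def intro!: wf_ssub sortok_gi)

lemma sortok_Pre: "isG v \<or> (\<exists>k. p = num k) \<Longrightarrow> sortok num v (Pre p)"
  by (auto simp: sortok_def)

lemma sig1_subst_Pre: "sig1 num F \<Longrightarrow> isG v \<or> (\<exists>k. p = num k) \<Longrightarrow> sig1 num (subst v (Pre p) F)"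
  unfolding subst_ssub sig1_def
  by (auto intro!: wf_ssub simp: sortok_def)

lemma gi_step: "v \<notin> set vs \<Longrightarrow>
  ssub (gi (set vs) c) (subst v (Pre p) F) = ssub (gi (set (v # vs)) (c(v := p))) F"
proof -
  assume v: "v \<notin> set vs"
  have "ssub (gi (set vs) c) (subst v (Pre p) F) = ssub (\<lambda>u. tsub (gi (set vs) c) ((Var(v := Pre p)) u)) F"
    by (simp add: subst_ssub ssub_ssub)
  also have "(\<lambda>u. tsub (gi (set vs) c) ((Var(v := Pre p)) u)) = gi (set (v # vs)) (c(v := p))"
    using v by (auto simp: gi_def)
  finally show ?thesis .
qed

lemma gi_step': "v \<notin> set vs \<Longrightarrow>
  ssub (gi (set vs) c) (subst v (Pre (c v)) F) = ssub (gi (set (v # vs)) c) F"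
  using gi_step[of v vs c "c v" F] by simp

lemma alls_omega:
  "distinct vs \<Longrightarrow> okG num \<Gamma> \<Longrightarrow> sig1 num \<Phi> \<Longrightarrow>
   (\<And>c. gsort num (set vs) c \<Longrightarrow> D num \<Gamma> (ssub (gi (set vs) c) \<Phi>)) \<Longrightarrow> D num \<Gamma> (alls vs \<Phi>)"
proof (induction vs arbitrary: \<Phi>)
  case Nil
  have "D num \<Gamma> (ssub (gi (set []) (\<lambda>_. undefined)) \<Phi>)" by (rule Nil.prems(4)) (simp add: gsort_def)
  moreover have "gi (set []) (\<lambda>_. undefined) = (Var :: var \<Rightarrow> 'a trm)" by (auto simp: gi_def)
  ultimately show ?case by simp
next
  case (Cons v vs)
  have v: "v \<notin> set vs" "distinct vs" using Cons.prems(1) by auto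
  have sub: "\<And>p. isG v \<or> (\<exists>k. p = num k) \<Longrightarrow> D num \<Gamma> (subst v (Pre p) (alls vs \<Phi>))"
  proof -
    fix p assume p: "isG v \<or> (\<exists>k. p = num k)"
    have "D num \<Gamma> (alls vs (subst v (Pre p) \<Phi>))"
    proof (rule Cons.IH[OF v(2) Cons.prems(2)])
      show "sig1 num (subst v (Pre p) \<Phi>)" using Cons.prems(3) p by (rule sig1_subst_Pre)
      fix c assume c: "gsort num (set vs) c"
      have "gsort num (set (v # vs)) (c(v := p))" using c p by (auto simp: gsort_def)
      then have "D num \<Gamma> (ssub (gi (set (v # vs)) (c(v := p))) \<Phi>)" by (rule Cons.prems(4))
      then show "D num \<Gamma> (ssub (gi (set vs) c) (subst v (Pre p) \<Phi>))" unfolding gi_step[OF v(1)] .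
    qed
    then show "D num \<Gamma> (subst v (Pre p) (alls vs \<Phi>))" using v(1) by (simp add: subst_alls)
  qed
  have o: "ok (sig1 num) \<Gamma> (All v (alls vs \<Phi>))" using Cons.prems(2,3) by (intro okI) auto
  show ?case
  proof (cases v)
    case (GV n)
    have "D num \<Gamma> (All (GV n) (alls vs \<Phi>))" using o GV sub by (intro deriv.omegaG) auto
    then show ?thesis using GV by simp
  next
    case (IV n)
    have "D num \<Gamma> (All (IV n) (alls vs \<Phi>))" using o IV sub by (intro deriv.omegaI) auto
    then show ?thesis using IV by simp
  qed
qed

lemma alls_elim:
  "D num \<Gamma> (alls vs \<Phi>) \<Longrightarrow> distinct vs \<Longrightarrow> gsort num (set vs) c \<Longrightarrow> D num \<Gamma> (ssub (gi (set vs) c) \<Phi>)"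
proof (induction vs arbitrary: \<Phi>)
  case Nil
  have "gi (set []) c = (Var :: var \<Rightarrow> 'a trm)" by (auto simp: gi_def)
  then show ?case using Nil by simp
next
  case (Cons v vs)
  have v: "v \<notin> set vs" "distinct vs" using Cons.prems(2) by auto
  have a: "D num \<Gamma> (All v (alls vs \<Phi>))" using Cons.prems(1) by simp
  have s: "sortok num v (Pre (c v))" using Cons.prems(3) by (intro sortok_Pre) (auto simp: gsort_def)
  have sp: "isG v \<or> (\<exists>k. c v = num k)" using Cons.prems(3) by (auto simp: gsort_def)
  have sg: "sig1 num (subst v (Pre (c v)) (alls vs \<Phi>))"
    using D_sig1[OF a] sp by (intro sig1_subst_Pre) auto
  have "D num \<Gamma> (subst v (Pre (c v)) (alls vs \<Phi>))"
    using a s freefor_Pre okI[OF D_okG[OF a] sg] by (rule deriv.allE)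
  then have "D num \<Gamma> (alls vs (subst v (Pre (c v)) \<Phi>))" using v(1) by (simp add: subst_alls)
  then have "D num \<Gamma> (ssub (gi (set vs) c) (subst v (Pre (c v)) \<Phi>))"
    using v(2) Cons.prems(3) by (intro Cons.IH) (auto simp: gsort_def)
  then show ?case unfolding gi_step'[OF v(1)] .
qed

lemma exs_intro:
  "D num \<Gamma> (ssub (gi (set vs) c) \<Phi>) \<Longrightarrow> distinct vs \<Longrightarrow> gsort num (set vs) c \<Longrightarrow> sig1 num \<Phi>
   \<Longrightarrow> D num \<Gamma> (exs vs \<Phi>)"
proof (induction vs arbitrary: \<Phi>)
  case Nil
  have "gi (set []) c = (Var :: var \<Rightarrow> 'a trm)" by (auto simp: gi_def)
  then show ?case using Nil by simp
next
  case (Cons v vs)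
  have v: "v \<notin> set vs" "distinct vs" using Cons.prems(2) by auto
  have sp: "isG v \<or> (\<exists>k. c v = num k)" using Cons.prems(3) by (auto simp: gsort_def)
  have s: "sortok num v (Pre (c v))" using sp by (rule sortok_Pre)
  have "D num \<Gamma> (exs vs (subst v (Pre (c v)) \<Phi>))"
  proof (rule Cons.IH[OF _ v(2)])
    show "D num \<Gamma> (ssub (gi (set vs) c) (subst v (Pre (c v)) \<Phi>))"
      unfolding gi_step'[OF v(1)] by (rule Cons.prems(1))
    show "gsort num (set vs) c" using Cons.prems(3) by (auto simp: gsort_def)
    show "sig1 num (subst v (Pre (c v)) \<Phi>)" using Cons.prems(4) sp by (rule sig1_subst_Pre)
  qed
  then have d: "D num \<Gamma> (subst v (Pre (c v)) (exs vs \<Phi>))" using v(1) by (simp add: subst_exs)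
  have o: "ok (sig1 num) \<Gamma> (Ex v (exs vs \<Phi>))" using D_okG[OF d] Cons.prems(4) by (intro okI) auto
  have "D num \<Gamma> (Ex v (exs vs \<Phi>))" using d s freefor_Pre o by (rule deriv.exI)
  then show ?case by simp
qed

lemma exs_chain:
  "D num \<Gamma> (exs vs B) \<Longrightarrow> D num \<Gamma> (alls vs (Imp B C)) \<Longrightarrow> distinct vs \<Longrightarrow>
   (\<forall>v\<in>set vs. v \<notin> \<Union>(fv ` \<Gamma>) \<and> v \<notin> fv C) \<Longrightarrow> D num \<Gamma> C"
proof (induction vs arbitrary: \<Gamma>)
  case Nil
  have "D num \<Gamma> B" using Nil.prems(1) by simp
  moreover have "D num \<Gamma> (Imp B C)" using Nil.prems(2) by simp
  ultimately show ?case by (rule impE')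
next
  case (Cons v vs)
  let ?G = "insert (exs vs B) \<Gamma>"
  have e: "D num \<Gamma> (Ex v (exs vs B))" using Cons.prems(1) by simp
  have a: "D num \<Gamma> (All v (alls vs (Imp B C)))" using Cons.prems(2) by simp
  have okG: "okG num ?G" using D_okG[OF e] D_sig1[OF e] by simp
  have sv: "sortok num v (Var v)" by (auto simp: sortok_def)
  have a1: "D num \<Gamma> (subst v (Var v) (alls vs (Imp B C)))"
    using a sv freefor_Var_self
  proof (rule deriv.allE)
    show "ok (sig1 num) \<Gamma> (subst v (Var v) (alls vs (Imp B C)))"
      using D_okG[OF a] D_sig1[OF a] by (intro okI) auto
  qed
  have a1': "D num \<Gamma> (alls vs (Imp B C))" using a1 by simp
  have a2: "D num ?G (alls vs (Imp B C))" by (rule weakI[OF a1' _ okG]) blast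
  have h: "D num ?G (exs vs B)" by (rule hypI[OF _ okG]) blast
  have dv: "distinct vs" using Cons.prems(3) by simp
  have fr: "\<forall>u\<in>set vs. u \<notin> \<Union>(fv ` ?G) \<and> u \<notin> fv C" using Cons.prems(4) by auto
  have c: "D num ?G C" by (rule Cons.IH[OF h a2 dv fr])
  have vv: "v \<notin> fv C \<union> \<Union>(fv ` \<Gamma>)" using Cons.prems(4) by auto
  have o: "ok (sig1 num) \<Gamma> C" using D_okG[OF e] D_sig1[OF c] by (intro okI)
  show ?case using e c vv o by (rule deriv.exE)
qed

lemma exs_elim:
  assumes e: "D num \<Gamma> (exs vs B)" and dv: "distinct vs" and sc: "sig1 num C"
    and fr: "\<forall>v\<in>set vs. v \<notin> \<Union>(fv ` \<Gamma>) \<and> v \<notin> fv C"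
    and h: "\<And>c. gsort num (set vs) c \<Longrightarrow> D num (insert (ssub (gi (set vs) c) B) \<Gamma>) C"
  shows "D num \<Gamma> C"
proof -
  have sB: "sig1 num B" using D_sig1[OF e] by simp
  have og: "okG num \<Gamma>" using D_okG[OF e] .
  have "D num \<Gamma> (alls vs (Imp B C))"
  proof (rule alls_omega[OF dv og])
    show "sig1 num (Imp B C)" using sB sc by simp
    fix c assume c: "gsort num (set vs) c"
    have cc: "ssub (gi (set vs) c) C = C"
    proof -
      have "ssub (gi (set vs) c) C = ssub Var C" by (rule ssub_cong) (use fr in \<open>auto simp: gi_def\<close>)
      then show ?thesis by simp
    qed
    have "D num \<Gamma> (Imp (ssub (gi (set vs) c) B) C)" using h[OF c] og by (rule impI')
    then show "D num \<Gamma> (ssub (gi (set vs) c) (Imp B C))" using cc by simp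
  qed
  then show ?thesis by (rule exs_chain[OF e _ dv fr])
qed

section \<open>ground semantics\<close>

definition teq :: "'p list \<Rightarrow> 'p list \<Rightarrow> 'p form" where
  "teq as bs = conjs (map2 (\<lambda>a b. Cmp Eq (Pre a) (Pre b)) as bs)"

lemma teq_props[simp]: "fv (teq as bs) = {}" "nopa (teq as bs)" "wf num (teq as bs)" "sig1 num (teq as bs)"
  by (auto simp: teq_def sig1_def dest!: set_zip_leftD set_zip_rightD)

lemma sat_conjs: "sat num e (conjs Fs) = (\<forall>F\<in>set Fs. sat num e F)"
  by (induction Fs) (auto simp: Top_def)

lemma sat_teq: "length as = length bs \<Longrightarrow> sat num e (teq as bs) = (as = bs)"
proof (induction as bs rule: list_induct2)
  case Nil then show ?case by (simp add: teq_def Top_def)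
next
  case (Cons x xs y ys) then show ?case by (simp add: teq_def)
qed

lemma sat_Neg[simp]: "sat num e (Neg F) = (\<not> sat num e F)" by (simp add: Neg_def)

lemma lexless_ground_props[simp]:
  "fv (lexless (map Pre as) (map Pre bs) :: 'p form) = {}"
  "wf num (lexless (map Pre as) (map Pre bs))"
  "sig1 num (lexless (map Pre as) (map Pre bs))"
proof -
  show f: "fv (lexless (map Pre as) (map Pre bs) :: 'p form) = {}"
    using fv_lexless[of "map Pre as" "map Pre bs"] by auto
  show w: "wf num (lexless (map Pre as) (map Pre bs))" by (rule wf_lexless) auto
  show "sig1 num (lexless (map Pre as) (map Pre bs))" using w by (simp add: sig1_def)
qed

lemma sat_lexless: "length as = length bs \<Longrightarrow> sat num e (lexless (map Pre as) (map Pre bs)) = (as < bs)"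
proof (induction as bs rule: list_induct2)
  case Nil then show ?case by simp
next
  case (Cons x xs y ys) then show ?case by auto
qed

lemma less_append_same: "length a = length p \<Longrightarrow> (a @ s < p @ s) = (a < (p :: 'a::linorder list))"
proof (induction a p rule: list_induct2)
  case Nil then show ?case by simp
next
  case (Cons x xs y ys) then show ?case by auto
qed

lemma toint_num: "strict_mono num \<Longrightarrow> toint num (num k) = k"
  unfolding toint_def by (rule the_equality) (auto dest: strict_mono_eq)

lemma wf_renameF: "wf num F \<Longrightarrow> \<forall>x\<in>set X. isG x \<Longrightarrow> wf num (renameF X Y F)"
proof -
  assume w: "wf num F" and g: "\<forall>x\<in>set X. isG x"
  have "\<And>ps. (\<forall>p\<in>set ps. isG (fst p)) \<Longrightarrow> wf num (foldr (\<lambda>(x, y) H. subst x (Var y) H) ps F)"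
  proof -
    fix ps :: "(var \<times> var) list"
    show "(\<forall>p\<in>set ps. isG (fst p)) \<Longrightarrow> wf num (foldr (\<lambda>(x, y) H. subst x (Var y) H) ps F)"
    proof (induction ps)
      case Nil then show ?case using w by simp
    next
      case (Cons p ps)
      have s: "\<forall>v. sortok num v ((Var(fst p := Var (snd p))) v)"
        using Cons.prems by (auto simp: sortok_def)
      have i: "wf num (foldr (\<lambda>(x, y) H. subst x (Var y) H) ps F)" using Cons by simp
      have e: "foldr (\<lambda>(x, y) H. subst x (Var y) H) (p # ps) F
          = ssub (Var(fst p := Var (snd p))) (foldr (\<lambda>(x, y) H. subst x (Var y) H) ps F)"
        by (simp add: case_prod_beta subst_ssub)
      show ?case unfolding e by (rule wf_ssub[OF i s])
    qed
  qed
  moreover have "\<forall>p\<in>set (zip X Y). isG (fst p)" using g by (auto dest: set_zip_leftD)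
  ultimately show ?thesis unfolding renameF_def by blast
qed

lemma wf_atleastF: "aggok X V G \<Longrightarrow> wf num G \<Longrightarrow> wf num (atleastF num X G r)"
proof -
  assume a: "aggok X V G" and w: "wf num G"
  have g: "\<forall>x\<in>set X. isG x" using a by (simp add: aggok_def)
  have h: "\<And>Y. wf num (renameF X Y G)" using wf_renameF[OF w g] .
  show ?thesis unfolding atleastF_def Let_def using h by (auto split: prod.splits)
qed

lemma set_pairs: "set (pairs n) = {(i, j). i < j \<and> j < n}"
  by (auto simp: pairs_def)

lemma copyvars_concat: "concat (map (copyvars b L) [0..<k]) = map (\<lambda>m. GV (b + m)) [0..<k * L]"
proof (induction k)
  case 0 then show ?case by simp
next
  case (Suc k)
  have "[0..<Suc k * L] = [0..<k * L] @ map (\<lambda>j. k * L + j) [0..<L]"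
    using upt_add_eq_append[of 0 "k * L" L] by (simp add: map_add_upt add.commute)
  then show ?case using Suc by (simp add: copyvars_def add.assoc)
qed

lemma set_copyvars: "set (copyvars b L i) = {GV (b + i * L + j) | j. j < L}"
  by (auto simp: copyvars_def)

lemma copyvars_sub: "i < k \<Longrightarrow> set (copyvars b L i) \<subseteq> set (concat (map (copyvars b L) [0..<k]))"
  by auto

definition eOf :: "nat \<Rightarrow> nat \<Rightarrow> 'p list list \<Rightarrow> var \<Rightarrow> 'p" where
  "eOf b L ts v = (case v of GV n \<Rightarrow> ts ! ((n - b) div L) ! ((n - b) mod L) | IV n \<Rightarrow> undefined)"

lemma map_eOf: "i < length ts \<Longrightarrow> length (ts ! i) = L \<Longrightarrow> map (eOf b L ts) (copyvars b L i) = ts ! i"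
proof -
  assume i: "i < length ts" and l: "length (ts ! i) = L"
  show ?thesis
  proof (rule nth_equalityI)
    show "length (map (eOf b L ts) (copyvars b L i)) = length (ts ! i)" using l by (simp add: copyvars_def)
    fix j assume "j < length (map (eOf b L ts) (copyvars b L i))"
    then have j: "j < L" by (simp add: copyvars_def)
    then have "(i * L + j) div L = i" "(i * L + j) mod L = j" by auto
    then show "map (eOf b L ts) (copyvars b L i) ! j = ts ! i ! j"
      using j by (simp add: copyvars_def eOf_def add.assoc)
  qed
qed

lemma tsub_comp_Var[simp]: "tsub s \<circ> Var = s" by (rule ext) simp

lemma capfree_ren: "set Y \<inter> bvars F = {} \<Longrightarrow> capfree (ren X Y) F"
proof -
  assume a: "set Y \<inter> bvars F = {}"
  have "\<And>v y. map_of (zip X Y) v = Some y \<Longrightarrow> y \<notin> bvars F"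
  proof -
    fix v y assume "map_of (zip X Y) v = Some y"
    then have "y \<in> set Y" by (auto dest: map_of_SomeD set_zip_rightD)
    then show "y \<notin> bvars F" using a by blast
  qed
  then show ?thesis by (auto simp: capfree_def ren_def split: option.splits)
qed

lemma allvars_lexless: "length xs = length us \<Longrightarrow>
  allvars (lexless xs us) = \<Union>(tvars ` set xs) \<union> \<Union>(tvars ` set us)"
  by (induction xs us rule: list_induct2) auto

locale L =
  fixes num :: "int \<Rightarrow> 'p::linorder" and X V :: "var list" and G :: "'p form"
  assumes mono: "strict_mono num" and agg: "aggwf num X V G"
begin

abbreviation "UT \<equiv> UTof X V G"
abbreviation "K \<equiv> Kof X V G"
abbreviation "b2 \<equiv> freshb K UT"
abbreviation "Yv i \<equiv> copyvars b2 (length X) i"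
abbreviation "Ys n \<equiv> concat (map Yv [0..<n])"

definition fXV :: "'p list \<Rightarrow> 'p list \<Rightarrow> var \<Rightarrow> 'p" where
  "fXV a s = (\<lambda>v. the (map_of (zip (X @ V) (a @ s)) v))"
definition Gt :: "'p list \<Rightarrow> 'p list \<Rightarrow> 'p form" where
  "Gt a s = ssub (gi (set (X @ V)) (fXV a s)) G"
definition Kin :: "'p list \<Rightarrow> 'p list \<Rightarrow> 'p list \<Rightarrow> 'p form" where
  "Kin t a s = And (Neg (lexless (map Pre (t @ s)) (map Pre (a @ s)))) (And (Gt t s) (Gt a s))"

lemma aggX: "distinct (X @ V)" "\<forall>v\<in>set (X @ V). isG v" "base G" "fv G \<subseteq> set X \<union> set V" "wf num G"
  using agg by (auto simp: aggwf_def aggok_def)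

lemmas UTp = UT_props[OF conjunct1[OF agg[unfolded aggwf_def]]]

lemma Kagg: "aggwf num UT (X @ V) K" by (rule K_aggwf[OF agg])

lemma map_fXV: "length a = length X \<Longrightarrow> length s = length V \<Longrightarrow> map (fXV a s) (X @ V) = a @ s"
  unfolding fXV_def using aggX(1) by (intro map_of_zip_map) auto

lemma gsort_XV: "gsort num (set (X @ V)) c"
  using aggX(2) by (auto simp: gsort_def)

lemma Gt_props: "fv (Gt a s) = {}" "sig1 num (Gt a s)"
proof -
  have "fv (Gt a s) \<subseteq> (\<Union>v\<in>fv G. tvars (gi (set (X @ V)) (fXV a s) v))"
    unfolding Gt_def by (rule fv_ssub)
  also have "\<dots> = {}" using aggX(4) by (auto simp: gi_def)
  finally show "fv (Gt a s) = {}" by simp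
  show "sig1 num (Gt a s)" unfolding Gt_def using aggX(3,5) gsort_XV
    by (intro sig1_ssub_gi) (auto simp: sig1_def base_noStart)
qed

lemma Kin_props: "fv (Kin t a s) = {}" "sig1 num (Kin t a s)"
  using lexless_ground_props[where as="t @ s" and bs="a @ s"] by (auto simp: Kin_def Gt_props simp del: map_append)

lemma map_eq_point: "map f xs = map g xs \<Longrightarrow> v \<in> set xs \<Longrightarrow> f v = g v"
  by (simp add: map_eq_conv)

lemma ssub_G_eq:
  assumes "map \<tau> (X @ V) = map Pre (a @ s)" "length a = length X" "length s = length V"
  shows "ssub \<tau> G = Gt a s"
  unfolding Gt_def
proof (rule ssub_cong)
  fix v assume "v \<in> fv G"
  then have v: "v \<in> set (X @ V)" using aggX(4) by auto
  have e2: "map (gi (set (X @ V)) (fXV a s)) (X @ V) = map (\<lambda>v. Pre (fXV a s v)) (X @ V)"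
    by (rule map_cong) (auto simp: gi_def)
  also have "\<dots> = map Pre (map (fXV a s) (X @ V))" by simp
  also have "\<dots> = map Pre (a @ s)" using map_fXV[OF assms(2,3)] by simp
  finally have "map \<tau> (X @ V) = map (gi (set (X @ V)) (fXV a s)) (X @ V)" using assms(1) by simp
  then show "\<tau> v = gi (set (X @ V)) (fXV a s) v" using v by (rule map_eq_point)
qed

lemma split_map:
  assumes "map \<tau> (X @ V) = map Pre (p @ s)" "length p = length X"
  shows "map \<tau> X = map Pre p" "map \<tau> V = map Pre s"
proof -
  have "map \<tau> X @ map \<tau> V = map Pre p @ map Pre s" using assms(1) by simp
  moreover have "length (map \<tau> X) = length (map Pre p)" using assms(2) by simp
  ultimately show "map \<tau> X = map Pre p" "map \<tau> V = map Pre s" by (simp_all add: append_eq_append_conv)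
qed

lemma capfree_ren_XUT: "capfree (ren X UT) G"
proof -
  have "\<And>v y. map_of (zip X UT) v = Some y \<Longrightarrow> y \<notin> bvars G"
  proof -
    fix v y assume "map_of (zip X UT) v = Some y"
    then have "y \<in> set UT" by (auto dest: map_of_SomeD set_zip_rightD)
    then show "y \<notin> bvars G" using UTp(4) bvars_allvars by blast
  qed
  then show ?thesis by (auto simp: capfree_def ren_def split: option.splits)
qed

lemma K_inst:
  assumes m: "map \<tau> (X @ V) = map Pre (p @ s)" and mu: "map \<tau> UT = map Pre t"
    and l: "length p = length X" "length t = length X" "length s = length V"
  shows "ssub \<tau> K = Kin t p s"
proof -
  have ag: "aggok X V G" using agg by (simp add: aggwf_def)
  note mX = split_map[OF m l(1)]
  have r: "renameF X UT G = ssub (ren X UT) G" by (rule renameF_UT[OF ag])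
  have g1: "ssub \<tau> G = Gt p s" by (rule ssub_G_eq[OF m l(1,3)])
  let ?t = "\<lambda>v. tsub \<tau> (ren X UT v)"
  have dX: "distinct X" using aggX(1) by simp
  have lU: "length X = length UT" using UTp(1) by simp
  have a1: "map ?t X = map Pre t"
  proof -
    have "map ?t X = map (tsub \<tau>) (map (ren X UT) X)" by simp
    also have "\<dots> = map (tsub \<tau>) (map Var UT)" unfolding ren_map[OF dX lU] by (rule refl)
    also have "\<dots> = map \<tau> UT" by simp
    finally show ?thesis using mu by simp
  qed
  have a2: "map ?t V = map Pre s"
  proof -
    have "map ?t V = map \<tau> V"
    proof (rule map_cong[OF refl])
      fix v assume "v \<in> set V"
      then have "v \<notin> set X" using aggX(1) by auto
      then show "?t v = \<tau> v" by (simp add: ren_out)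
    qed
    then show ?thesis using mX(2) by simp
  qed
  have g2: "ssub \<tau> (renameF X UT G) = Gt t s"
    unfolding r ssub_ssub[OF capfree_ren_XUT]
    by (rule ssub_G_eq) (use a1 a2 l in auto)
  have g3: "ssub \<tau> (lexless (map Var (UT @ V)) (map Var (X @ V))) = lexless (map Pre (t @ s)) (map Pre (p @ s))"
  proof -
    have "map (tsub \<tau>) (map Var (UT @ V)) = map Pre (t @ s)" using mu mX by simp
    moreover have "map (tsub \<tau>) (map Var (X @ V)) = map Pre (p @ s)" using mX by simp
    ultimately show ?thesis by (simp only: ssub_lexless)
  qed
  show ?thesis unfolding Kof_def Kin_def using g1 g2 g3 by simp
qed

lemma XVUT_in_K: "set X \<union> set V \<union> set UT \<subseteq> allvars K"
proof -
  have "length (map Var (UT @ V) :: 'p trm list) = length (map Var (X @ V) :: 'p trm list)"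
    using UTp(1) by simp
  then have "allvars (lexless (map Var (UT @ V)) (map Var (X @ V)) :: 'p form) = set UT \<union> set V \<union> set X"
    by (simp add: allvars_lexless) blast
  then show ?thesis by (auto simp: Kof_def Neg_def)
qed

lemma Y_fresh: "v \<in> set (Yv i) \<Longrightarrow> v \<notin> allvars K \<and> v \<notin> set UT"
proof -
  assume "v \<in> set (Yv i)"
  then have v: "b2 \<le> vidx v" by (auto simp: copyvars_def)
  have "\<And>u. u \<in> allvars K \<union> set UT \<Longrightarrow> vidx u < b2" by (rule freshb_gt)
  then show ?thesis using v by fastforce
qed

lemma Y_disj: "set (Yv i) \<inter> set (X @ V) = {}" "set (Yv i) \<inter> bvars K = {}" "set (Yv i) \<inter> set UT = {}"
  using Y_fresh XVUT_in_K bvars_allvars by fastforce+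

lemma Ys_disj: "set (Ys n) \<inter> set (X @ V) = {}"
  using Y_disj(1) by fastforce

lemma Ys_distinct: "distinct (Ys n)"
  by (simp add: copyvars_concat distinct_map inj_on_def)

lemma H_inst:
  assumes m: "map \<tau> (X @ V) = map Pre (p @ s)" and mu: "map \<tau> (Yv i) = map Pre t"
    and l: "length p = length X" "length t = length X" "length s = length V"
  shows "ssub \<tau> (renameF UT (Yv i) K) = Kin t p s"
proof -
  have lY: "length UT = length (Yv i)" using UTp(1) by (simp add: copyvars_def)
  have dU: "distinct UT" using UTp(2) by simp
  have r: "renameF UT (Yv i) K = ssub (ren UT (Yv i)) K"
    by (rule renameF_ssub[OF lY dU]) (use Y_disj in auto)
  have cf: "capfree (ren UT (Yv i)) K" by (rule capfree_ren) (use Y_disj in auto)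
  let ?t = "\<lambda>v. tsub \<tau> (ren UT (Yv i) v)"
  have a1: "map ?t (X @ V) = map Pre (p @ s)"
  proof -
    have "map ?t (X @ V) = map \<tau> (X @ V)"
    proof (rule map_cong[OF refl])
      fix v assume "v \<in> set (X @ V)"
      then have "v \<notin> set UT" using UTp(2) by auto
      then show "?t v = \<tau> v" by (simp add: ren_out)
    qed
    then show ?thesis using m by (rule trans)
  qed
  have a2: "map ?t UT = map Pre t"
  proof -
    have "map ?t UT = map (tsub \<tau>) (map (ren UT (Yv i)) UT)" by simp
    also have "\<dots> = map (tsub \<tau>) (map Var (Yv i))" unfolding ren_map[OF dU lY] by (rule refl)
    also have "\<dots> = map \<tau> (Yv i)" by simp
    finally show ?thesis using mu by simp
  qed
  show ?thesis unfolding r ssub_ssub[OF cf] by (rule K_inst[OF a1 a2 l])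
qed

end

lemma ssub_tupeq_Pre:
  "map \<tau> xs = map Pre as \<Longrightarrow> map \<tau> ys = map Pre bs \<Longrightarrow> ssub \<tau> (tupeq xs ys) = teq as bs"
proof (induction xs arbitrary: ys as bs)
  case Nil then show ?case by (simp add: ssub_tupeq teq_def)
next
  case (Cons x xs)
  obtain a as' where as: "as = a # as'" using Cons.prems(1) by (cases as) auto
  show ?case
  proof (cases ys)
    case Nil then show ?thesis using Cons.prems(2) by (simp add: ssub_tupeq teq_def)
  next
    case (Cons y ys')
    obtain b bs' where bs: "bs = b # bs'" using Cons.prems(2) \<open>ys = y # ys'\<close> by (cases bs) auto
    have "ssub \<tau> (tupeq xs ys') = teq as' bs'"
      using Cons.prems as bs \<open>ys = y # ys'\<close> by (intro Cons.IH) auto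
    then show ?thesis using Cons.prems as bs \<open>ys = y # ys'\<close> by (simp add: ssub_tupeq teq_def)
  qed
qed

context L
begin

definition Bdy :: "nat \<Rightarrow> 'p form" where
  "Bdy n = And (conjs (map (\<lambda>i. renameF UT (Yv i) K) [0..<n]))
               (conjs (map (\<lambda>(i, j). Neg (tupeq (Yv i) (Yv j))) (pairs n)))"

definition Bk :: "'p list \<Rightarrow> 'p list \<Rightarrow> int \<Rightarrow> 'p form" where
  "Bk a s k = ssub (gi (set (X @ V)) (fXV a s)) (atleastF num UT K (num k))"

lemma atleastF_eq: "atleastF num UT K (num k) = (if k \<le> 0 then Top else exs (Ys (nat k)) (Bdy (nat k)))"
proof -
  have t: "toint num (num k) = k" by (rule toint_num[OF mono])
  have l: "length UT = length X" by (rule UTp(1))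
  show ?thesis unfolding atleastF_def Let_def Bdy_def using t l by auto
qed

lemma sig1_Bdy: "sig1 num (Bdy n)"
proof -
  have wK: "wf num K" and bK: "base K" using Kagg by (auto simp: aggwf_def aggok_def)
  have "\<And>i. sig1 num (renameF UT (Yv i) K)"
    using wf_renameF[OF wK UTp(3)] bK by (auto simp: sig1_def base_noStart)
  moreover have "\<And>i j. sig1 num (tupeq (Yv i) (Yv j) :: 'p form)" by (simp add: sig1_def)
  ultimately show ?thesis unfolding Bdy_def by (auto split: prod.splits)
qed

lemma map_gi_XV: "length a = length X \<Longrightarrow> length s = length V \<Longrightarrow>
  map (gi (set (X @ V)) (fXV a s)) (X @ V) = map Pre (a @ s)"
proof -
  assume l: "length a = length X" "length s = length V"
  have "map (gi (set (X @ V)) (fXV a s)) (X @ V) = map (\<lambda>v. Pre (fXV a s v)) (X @ V)"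
    by (rule map_cong) (auto simp: gi_def)
  also have "\<dots> = map Pre (map (fXV a s) (X @ V))" by simp
  also have "\<dots> = map Pre (a @ s)" using map_fXV[OF l] by simp
  finally show ?thesis .
qed

lemma Def:
  assumes og: "okG num \<Gamma>" and l: "length a = length X" "length s = length V"
  shows "D num \<Gamma> (Iff (Atleast UT (X @ V) K (map Pre (a @ s)) (Pre (num k))) (Bk a s k))"
proof -
  let ?F = "alls (X @ V) (Iff (Atleast UT (X @ V) K (map Var (X @ V)) (Pre (num k))) (atleastF num UT K (num k)))"
  have mem: "?F \<in> Defs num" using Kagg unfolding Defs_def by blast
  have ag: "aggok UT (X @ V) K" and wK: "wf num K" using Kagg by (auto simp: aggwf_def)
  have bK: "base K" using ag by (simp add: aggok_def)
  have "wf num (atleastF num UT K (num k))" by (rule wf_atleastF[OF ag wK])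
  moreover have "noStart (atleastF num UT K (num k))" by (rule base_noStart[OF base_atleastF[OF bK]])
  ultimately have sg: "sig1 num ?F" using ag wK by (auto simp: sig1_def)
  have d: "D num \<Gamma> ?F" using mem by (intro deriv.ax okI[OF og sg]) (auto simp: HTax_def)
  have "D num \<Gamma> (ssub (gi (set (X @ V)) (fXV a s)) (Iff (Atleast UT (X @ V) K (map Var (X @ V)) (Pre (num k))) (atleastF num UT K (num k))))"
    by (rule alls_elim[OF d aggX(1) gsort_XV])
  moreover have "map (tsub (gi (set (X @ V)) (fXV a s))) (map Var (X @ V)) = map Pre (a @ s)"
    using map_gi_XV[OF l] by simp
  ultimately show ?thesis unfolding Bk_def by simp
qed

lemma Bk_le0: "k \<le> 0 \<Longrightarrow> Bk a s k = Top"
  unfolding Bk_def atleastF_eq by simp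

lemma Bk_pos: "0 < k \<Longrightarrow> Bk a s k = exs (Ys (nat k)) (ssub (gi (set (X @ V)) (fXV a s)) (Bdy (nat k)))"
proof -
  assume k: "0 < k"
  have "\<forall>v\<in>set (Ys (nat k)). gi (set (X @ V)) (fXV a s) v = Var v"
    using Ys_disj[of "nat k"] by (auto simp: gi_def)
  then show ?thesis unfolding Bk_def atleastF_eq using k by (simp add: ssub_exs)
qed

lemma tau_facts:
  fixes n :: nat and e :: "var \<Rightarrow> 'p" and i :: nat
  assumes l: "length a = length X" "length s = length V"
  defines "\<tau> \<equiv> \<lambda>v. tsub (gi (set (Ys n)) e) (gi (set (X @ V)) (fXV a s) v)"
  shows "map \<tau> (X @ V) = map Pre (a @ s)" "i < n \<Longrightarrow> map \<tau> (Yv i) = map Pre (map e (Yv i))"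
proof -
  have "map \<tau> (X @ V) = map (tsub (gi (set (Ys n)) e)) (map (gi (set (X @ V)) (fXV a s)) (X @ V))"
    by (simp add: \<tau>_def)
  also have "\<dots> = map Pre (a @ s)" unfolding map_gi_XV[OF l] by simp
  finally show "map \<tau> (X @ V) = map Pre (a @ s)" .
  assume i: "i < n"
  show "map \<tau> (Yv i) = map Pre (map e (Yv i))"
  proof -
    have "map \<tau> (Yv i) = map (\<lambda>v. Pre (e v)) (Yv i)"
    proof (rule map_cong[OF refl])
      fix v assume v: "v \<in> set (Yv i)"
      then have "v \<notin> set (X @ V)" using Y_disj(1) by blast
      moreover have "v \<in> set (Ys n)" using v i by auto
      ultimately show "\<tau> v = Pre (e v)" by (simp add: \<tau>_def gi_def)
    qed
    then show ?thesis by simp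
  qed
qed

lemma ssub_Bdy_parts:
  fixes n :: nat and e :: "var \<Rightarrow> 'p"
  assumes l: "length a = length X" "length s = length V"
  defines "\<tau> \<equiv> \<lambda>v. tsub (gi (set (Ys n)) e) (gi (set (X @ V)) (fXV a s) v)"
  shows "ssub (gi (set (Ys n)) e) (ssub (gi (set (X @ V)) (fXV a s)) (Bdy n)) =
     And (conjs (map (\<lambda>i. Kin (map e (Yv i)) a s) [0..<n]))
         (conjs (map (\<lambda>(i, j). Neg (teq (map e (Yv i)) (map e (Yv j)))) (pairs n)))"
proof -
  have c: "ssub (gi (set (Ys n)) e) (ssub (gi (set (X @ V)) (fXV a s)) (Bdy n)) = ssub \<tau> (Bdy n)"
    unfolding \<tau>_def by (rule ssub_ssub) simp
  have m: "map \<tau> (X @ V) = map Pre (a @ s)" unfolding \<tau>_def by (rule tau_facts(1)[OF l])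
  have my: "\<And>i. i < n \<Longrightarrow> map \<tau> (Yv i) = map Pre (map e (Yv i))"
    unfolding \<tau>_def by (rule tau_facts(2)[OF l])
  have le: "\<And>i. length (map e (Yv i)) = length X" by (simp add: copyvars_def)
  have p1: "map (ssub \<tau>) (map (\<lambda>i. renameF UT (Yv i) K) [0..<n]) = map (\<lambda>i. Kin (map e (Yv i)) a s) [0..<n]"
  proof (rule nth_equalityI)
    fix i assume "i < length (map (ssub \<tau>) (map (\<lambda>i. renameF UT (Yv i) K) [0..<n]))"
    then have i: "i < n" by simp
    have "ssub \<tau> (renameF UT (Yv i) K) = Kin (map e (Yv i)) a s"
      by (rule H_inst[OF m my[OF i] l(1) le l(2)])
    then show "map (ssub \<tau>) (map (\<lambda>i. renameF UT (Yv i) K) [0..<n]) ! i = map (\<lambda>i. Kin (map e (Yv i)) a s) [0..<n] ! i"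
      using i by simp
  qed simp
  have p2: "map (ssub \<tau>) (map (\<lambda>(i, j). Neg (tupeq (Yv i) (Yv j))) (pairs n))
      = map (\<lambda>(i, j). Neg (teq (map e (Yv i)) (map e (Yv j)))) (pairs n)"
    unfolding map_map
  proof (rule map_cong[OF refl])
    fix p assume "p \<in> set (pairs n)"
    then obtain i j where p: "p = (i, j)" "i < j" "j < n" by (auto simp: set_pairs)
    have "ssub \<tau> (tupeq (Yv i) (Yv j)) = teq (map e (Yv i)) (map e (Yv j))"
      using p(2,3) by (intro ssub_tupeq_Pre my) auto
    then show "(ssub \<tau> \<circ> (\<lambda>(i, j). Neg (tupeq (Yv i) (Yv j)))) p = (\<lambda>(i, j). Neg (teq (map e (Yv i)) (map e (Yv j)))) p"
      using p by simp
  qed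
  have "ssub \<tau> (Bdy n) = And (conjs (map (ssub \<tau>) (map (\<lambda>i. renameF UT (Yv i) K) [0..<n])))
      (conjs (map (ssub \<tau>) (map (\<lambda>(i, j). Neg (tupeq (Yv i) (Yv j))) (pairs n))))"
    by (simp only: Bdy_def ssub.simps ssub_conjs)
  then show ?thesis unfolding c p1 p2 .
qed

lemma Bk_intro:
  assumes k: "0 < k" and og: "okG num \<Gamma>" and l: "length a = length X" "length s = length V"
    and lt: "length ts = nat k" "\<forall>t\<in>set ts. length t = length X"
    and hk: "\<And>i. i < nat k \<Longrightarrow> D num \<Gamma> (Kin (ts ! i) a s)"
    and hd: "\<And>i j. i < j \<Longrightarrow> j < nat k \<Longrightarrow> D num \<Gamma> (Neg (teq (ts ! i) (ts ! j)))"
  shows "D num \<Gamma> (Bk a s k)"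
proof -
  let ?n = "nat k"
  let ?e = "eOf b2 (length X) ts"
  have me: "\<And>i. i < ?n \<Longrightarrow> map ?e (Yv i) = ts ! i"
    using lt by (intro map_eOf) auto
  have gs: "gsort num (set (Ys ?n)) ?e" by (auto simp: gsort_def copyvars_def)
  have body: "D num \<Gamma> (ssub (gi (set (Ys ?n)) ?e) (ssub (gi (set (X @ V)) (fXV a s)) (Bdy ?n)))"
    unfolding ssub_Bdy_parts[OF l]
  proof (rule andI')
    show "D num \<Gamma> (conjs (map (\<lambda>i. Kin (map ?e (Yv i)) a s) [0..<?n]))"
    proof (rule conjsI[OF og])
      fix F assume "F \<in> set (map (\<lambda>i. Kin (map ?e (Yv i)) a s) [0..<?n])"
      then obtain i where i: "i < ?n" "F = Kin (map ?e (Yv i)) a s" by auto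
      then show "D num \<Gamma> F" using hk[OF i(1)] me[OF i(1)] by simp
    qed
    show "D num \<Gamma> (conjs (map (\<lambda>(i, j). Neg (teq (map ?e (Yv i)) (map ?e (Yv j)))) (pairs ?n)))"
    proof (rule conjsI[OF og])
      fix F assume "F \<in> set (map (\<lambda>(i, j). Neg (teq (map ?e (Yv i)) (map ?e (Yv j)))) (pairs ?n))"
      then obtain i j where ij: "i < j" "j < ?n" "F = Neg (teq (map ?e (Yv i)) (map ?e (Yv j)))"
        by (auto simp: set_pairs)
      then show "D num \<Gamma> F" using hd[OF ij(1,2)] me[of i] me[of j] by simp
    qed
  qed
  have sb: "sig1 num (ssub (gi (set (X @ V)) (fXV a s)) (Bdy ?n))"
    by (rule sig1_ssub_gi[OF sig1_Bdy gsort_XV])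
  have "D num \<Gamma> (exs (Ys ?n) (ssub (gi (set (X @ V)) (fXV a s)) (Bdy ?n)))"
    by (rule exs_intro[OF body Ys_distinct gs sb])
  then show ?thesis unfolding Bk_pos[OF k] .
qed

lemma Bk_elim:
  assumes k: "0 < k" and d: "D num \<Gamma> (Bk a s k)" and l: "length a = length X" "length s = length V"
    and cl: "\<Union>(fv ` \<Gamma>) = {}" "fv C = {}" "sig1 num C"
    and h: "\<And>ts \<Gamma>'. length ts = nat k \<Longrightarrow> \<forall>t\<in>set ts. length t = length X \<Longrightarrow> \<Gamma> \<subseteq> \<Gamma>' \<Longrightarrow> okG num \<Gamma>' \<Longrightarrow>
       (\<forall>i<nat k. D num \<Gamma>' (Kin (ts ! i) a s)) \<Longrightarrow>
       (\<forall>i j. i < j \<longrightarrow> j < nat k \<longrightarrow> D num \<Gamma>' (Neg (teq (ts ! i) (ts ! j)))) \<Longrightarrow> D num \<Gamma>' C"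
  shows "D num \<Gamma> C"
proof -
  let ?n = "nat k"
  let ?B = "ssub (gi (set (X @ V)) (fXV a s)) (Bdy ?n)"
  have e: "D num \<Gamma> (exs (Ys ?n) ?B)" using d unfolding Bk_pos[OF k] .
  show ?thesis
  proof (rule exs_elim[OF e Ys_distinct cl(3)])
    show "\<forall>v\<in>set (Ys ?n). v \<notin> \<Union>(fv ` \<Gamma>) \<and> v \<notin> fv C" using cl by simp
    fix c assume c: "gsort num (set (Ys ?n)) c"
    let ?H = "ssub (gi (set (Ys ?n)) c) ?B"
    let ?G = "insert ?H \<Gamma>"
    let ?ts = "map (\<lambda>i. map c (Yv i)) [0..<?n]"
    have sH: "sig1 num ?H" by (rule sig1_ssub_gi[OF sig1_ssub_gi[OF sig1_Bdy gsort_XV] c])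
    have og: "okG num ?G" using D_okG[OF d] sH by simp
    have hH: "D num ?G ?H" by (rule hypI[OF _ og]) simp
    have hH': "D num ?G (And (conjs (map (\<lambda>i. Kin (map c (Yv i)) a s) [0..<?n]))
         (conjs (map (\<lambda>(i, j). Neg (teq (map c (Yv i)) (map c (Yv j)))) (pairs ?n))))"
      using hH unfolding ssub_Bdy_parts[OF l] .
    show "D num ?G C"
    proof (rule h)
      show "length ?ts = ?n" by simp
      show "\<forall>t\<in>set ?ts. length t = length X" by (auto simp: copyvars_def)
      show "\<Gamma> \<subseteq> ?G" by blast
      show "okG num ?G" by (rule og)
      show "\<forall>i<?n. D num ?G (Kin (?ts ! i) a s)"
      proof (rule HOL.allI, rule HOL.impI)
        fix i assume i: "i < ?n"
        have "D num ?G (Kin (map c (Yv i)) a s)"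
          by (rule conjsE[OF andE1'[OF hH']]) (use i in simp)
        then show "D num ?G (Kin (?ts ! i) a s)" using i by simp
      qed
      show "\<forall>i j. i < j \<longrightarrow> j < ?n \<longrightarrow> D num ?G (Neg (teq (?ts ! i) (?ts ! j)))"
      proof (rule HOL.allI, rule HOL.allI, rule HOL.impI, rule HOL.impI)
        fix i j assume ij: "i < j" "j < ?n"
        have "D num ?G (Neg (teq (map c (Yv i)) (map c (Yv j))))"
          by (rule conjsE[OF andE2'[OF hH']]) (use ij in \<open>force simp: set_pairs\<close>)
        then show "D num ?G (Neg (teq (?ts ! i) (?ts ! j)))" using ij by simp
      qed
    qed
  qed
qed

end

lemma substt_comp_Pre[simp]: "substt v s \<circ> Pre = Pre" by (rule ext) simp

lemma subst_at: "subst v t (Atleast A B C (map Pre l) (Var v)) = Atleast A B C (map Pre l) t"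
  by simp

lemma eq_conv:
  assumes d: "D num \<Gamma> (Atleast A B C (map Pre l) s)" and e: "D num \<Gamma> (Cmp Eq s t)"
    and so: "itrm num s" "itrm num t"
  shows "D num \<Gamma> (Atleast A B C (map Pre l) t)"
proof -
  let ?F = "Atleast A B C (map Pre l) (Var (IV 0))"
  have d': "D num \<Gamma> (subst (IV 0) s ?F)" using d by simp
  have s1: "sortok num (IV 0) s" "sortok num (IV 0) t" using so by (auto simp: sortok_def)
  have "sig1 num (Atleast A B C (map Pre l) t)"
    using D_sig1[OF d] so by (auto simp: sig1_def itrm_gtrm)
  then have o: "ok (sig1 num) \<Gamma> (Atleast A B C (map Pre l) t)" using D_okG[OF d] by (intro okI)
  have "D num \<Gamma> (subst (IV 0) t ?F)" by (rule deriv.eqSubst[OF e d' s1]) (simp_all add: o)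
  then show ?thesis by simp
qed

lemma std_plus:
  assumes m: "strict_mono num" and og: "okG num \<Gamma>"
  shows "D num \<Gamma> (Cmp Eq (Plus (Pre (num k)) (Pre (num 1))) (Pre (num (k + 1))))"
    "D num \<Gamma> (Cmp Eq (Pre (num (k + 1))) (Plus (Pre (num k)) (Pre (num 1))))"
proof -
  have t: "\<And>j. toint num (num j) = j" by (rule toint_num[OF m])
  show "D num \<Gamma> (Cmp Eq (Plus (Pre (num k)) (Pre (num 1))) (Pre (num (k + 1))))"
    by (rule trueI[OF og, where e="\<lambda>_. num 0"]) (auto simp: t gtrm_def)
  show "D num \<Gamma> (Cmp Eq (Pre (num (k + 1))) (Plus (Pre (num k)) (Pre (num 1))))"
    by (rule trueI[OF og, where e="\<lambda>_. num 0"]) (auto simp: t gtrm_def)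
qed

lemma plus_to_num:
  assumes m: "strict_mono num" and d: "D num \<Gamma> (Atleast A B C (map Pre l) (Plus (Pre (num k)) (Pre (num 1))))"
  shows "D num \<Gamma> (Atleast A B C (map Pre l) (Pre (num (k + 1))))"
  by (rule eq_conv[OF d std_plus(1)[OF m D_okG[OF d]]]) auto

lemma num_to_plus:
  assumes m: "strict_mono num" and d: "D num \<Gamma> (Atleast A B C (map Pre l) (Pre (num (k + 1))))"
  shows "D num \<Gamma> (Atleast A B C (map Pre l) (Plus (Pre (num k)) (Pre (num 1))))"
  by (rule eq_conv[OF d std_plus(2)[OF m D_okG[OF d]]]) auto

lemma pick:
  fixes ts :: "'a::linorder list"
  assumes "length ts = Suc k" "0 < k" "distinct ts" "\<forall>t\<in>set ts. p \<le> t"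
  shows "\<exists>u w. u \<in> set ts \<and> p < u \<and> length w = k \<and> distinct w \<and> set w \<subseteq> set ts \<and> (\<forall>x\<in>set w. u \<le> x)"
proof -
  let ?S = "set ts"
  have cS: "card ?S = Suc k" using assms(1,3) by (simp add: distinct_card)
  have fS: "finite ?S" by simp
  have neS: "?S \<noteq> {}" using cS by auto
  let ?m = "Min ?S"
  have mS: "?m \<in> ?S" using fS neS by (rule Min_in)
  let ?S' = "?S - {?m}"
  have cS': "card ?S' = k" using cS mS by simp
  have neS': "?S' \<noteq> {}"
  proof
    assume "?S' = {}"
    then have "card ?S' = 0" by (simp only: card.empty)
    then show False using cS' assms(2) by simp
  qed
  let ?u = "Min ?S'"
  have uS': "?u \<in> ?S'" using neS' by (intro Min_in) auto
  have mu: "?m < ?u"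
  proof -
    have "?m \<le> ?u" using uS' fS by (intro Min_le) auto
    moreover have "?m \<noteq> ?u" using uS' by auto
    ultimately show ?thesis by simp
  qed
  have pm: "p \<le> ?m" using assms(4) mS by blast
  let ?w = "sorted_list_of_set ?S'"
  show ?thesis
  proof (intro HOL.exI conjI)
    show "?u \<in> set ts" using uS' by blast
    show "p < ?u" using pm mu by simp
    show "length ?w = k" using cS' by simp
    show "distinct ?w" by simp
    show "set ?w \<subseteq> set ts" by auto
    show "\<forall>x\<in>set ?w. ?u \<le> x" by auto
  qed
qed

context L
begin

abbreviation AT :: "'p list \<Rightarrow> 'p list \<Rightarrow> 'p trm \<Rightarrow> 'p form" where
  "AT a s n \<equiv> Atleast UT (X @ V) K (map Pre (a @ s)) n"

lemma AT_fv[simp]: "fv (AT a s (Pre r)) = {}" by simp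

lemma AT_sig1: "length a = length X \<Longrightarrow> length s = length V \<Longrightarrow> sig1 num (AT a s (Pre r))"
  using Kagg by (auto simp: sig1_def aggwf_def)

lemma Cmp_sig1[simp]: "sig1 num (Cmp c (Pre x) (Pre y))" by (simp add: sig1_def)

lemma num_less: "num i < num j \<longleftrightarrow> i < j" using mono by (simp add: strict_mono_less)
lemma num_le: "num i \<le> num j \<longleftrightarrow> i \<le> j" using mono by (simp add: strict_mono_less_eq)

lemma Kin_neg_true:
  assumes og: "okG num \<Gamma>" and le: "p \<le> t" "length t = length p"
  shows "D num \<Gamma> (Neg (lexless (map Pre (t @ s)) (map Pre (p @ s))))"
proof (rule trueI[OF og, where e="\<lambda>_. num 0"])
  show "wf num (Neg (lexless (map Pre (t @ s)) (map Pre (p @ s))))"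
    using lexless_ground_props(2)[of num "t @ s" "p @ s"] by simp
  show "fv (Neg (lexless (map Pre (t @ s)) (map Pre (p @ s)))) = {}"
    using lexless_ground_props(1)[of "t @ s" "p @ s"] by simp
  show "nopa (Neg (lexless (map Pre (t @ s)) (map Pre (p @ s))))" by simp
  have "\<not> (t @ s < p @ s)" using le less_append_same[OF le(2)] by auto
  then show "sat num (\<lambda>_. num 0) (Neg (lexless (map Pre (t @ s)) (map Pre (p @ s))))"
    using sat_lexless[of "t @ s" "p @ s" num] le(2) by simp
qed

lemma Kin_neg_false:
  assumes d: "D num \<Gamma> (Kin t p s)" and lt: "t < p" "length t = length p" and sc: "sig1 num C"
  shows "D num \<Gamma> C"
proof -
  have a: "D num \<Gamma> (Neg (lexless (map Pre (t @ s)) (map Pre (p @ s))))"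
    using andE1'[OF d[unfolded Kin_def]] .
  have "t @ s < p @ s" using lt less_append_same[OF lt(2)] by auto
  then have "\<not> sat num (\<lambda>_. num 0) (Neg (lexless (map Pre (t @ s)) (map Pre (p @ s))))"
    using sat_lexless[of "t @ s" "p @ s" num] lt(2) by simp
  moreover have "fv (Neg (lexless (map Pre (t @ s)) (map Pre (p @ s)))) = {}"
    using lexless_ground_props(1)[of "t @ s" "p @ s"] by simp
  ultimately show ?thesis using falseE[OF a] sc by simp
qed

lemma Kin_G1: "D num \<Gamma> (Kin t p s) \<Longrightarrow> D num \<Gamma> (Gt t s)"
  unfolding Kin_def by (rule andE1'[OF andE2'])
lemma Kin_G2: "D num \<Gamma> (Kin t p s) \<Longrightarrow> D num \<Gamma> (Gt p s)"
  unfolding Kin_def by (rule andE2'[OF andE2'])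

lemma Kin_intro:
  assumes og: "okG num \<Gamma>" and le: "p \<le> t" "length t = length p"
    and g1: "D num \<Gamma> (Gt t s)" and g2: "D num \<Gamma> (Gt p s)"
  shows "D num \<Gamma> (Kin t p s)"
  unfolding Kin_def by (rule andI'[OF Kin_neg_true[OF og le] andI'[OF g1 g2]])

lemma teq_true:
  assumes og: "okG num \<Gamma>" and ne: "a \<noteq> b" "length a = length b"
  shows "D num \<Gamma> (Neg (teq a b))"
  by (rule trueI[OF og, where e="\<lambda>_. num 0"]) (use ne sat_teq[OF ne(2)] in auto)

lemma teq_false:
  assumes d: "D num \<Gamma> (Neg (teq a a))" and sc: "sig1 num C"
  shows "D num \<Gamma> C"
  by (rule falseE[OF d _ _ _ sc, where e="\<lambda>_. num 0"]) (auto simp: sat_teq)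

lemma ground1:
  assumes og: "okG num \<Gamma>" and l: "length p = length X" "length q = length V"
  shows "D num \<Gamma> (Imp (Cmp Le (Pre (num k)) (Pre (num 0))) (AT p q (Pre (num k))))"
proof -
  let ?C = "Cmp Le (Pre (num k)) (Pre (num 0))"
  let ?G = "insert ?C \<Gamma>"
  have og': "okG num ?G" using og by simp
  have "D num ?G (AT p q (Pre (num k)))"
  proof (cases "k \<le> 0")
    case True
    have "D num ?G (Bk p q k)" unfolding Bk_le0[OF True] by (rule TopI[OF og'])
    then show ?thesis by (rule iffD2'[OF Def[OF og' l]])
  next
    case False
    have h: "D num ?G ?C" by (rule hypI[OF _ og']) simp
    have "\<not> sat num (\<lambda>_. num 0) ?C" using False num_le by simp
    then show ?thesis using falseE[OF h] AT_sig1[OF l] by simp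
  qed
  then show ?thesis by (rule impI'[OF _ og])
qed

lemma ground2:
  assumes og: "okG num \<Gamma>" and cl: "\<Union>(fv ` \<Gamma>) = {}" and l: "length p = length X" "length q = length V"
  shows "D num \<Gamma> (Iff (AT p q (Pre (num 1))) (Gt p q))"
proof (rule iffI')
  let ?G = "insert (AT p q (Pre (num 1))) \<Gamma>"
  have og': "okG num ?G" using og AT_sig1[OF l] by simp
  have b: "D num ?G (Bk p q 1)" by (rule iffD1'[OF Def[OF og' l] hypI[OF _ og']]) simp
  have "D num ?G (Gt p q)"
  proof (rule Bk_elim[OF _ b l])
    show "\<Union>(fv ` ?G) = {}" using cl by simp
    show "fv (Gt p q) = {}" "sig1 num (Gt p q)" by (rule Gt_props)+
    fix ts \<Gamma>' assume "length ts = nat 1" and "\<forall>i<nat 1. D num \<Gamma>' (Kin (ts ! i) p q)"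
    then show "D num \<Gamma>' (Gt p q)" using Kin_G2 by auto
  qed simp
  then show "D num \<Gamma> (Imp (AT p q (Pre (num 1))) (Gt p q))" by (rule impI'[OF _ og])
next
  let ?G = "insert (Gt p q) \<Gamma>"
  have og': "okG num ?G" using og Gt_props by simp
  have hg: "D num ?G (Gt p q)" by (rule hypI[OF _ og']) simp
  have "D num ?G (Bk p q 1)"
  proof (rule Bk_intro[OF _ og' l, where ts="[p]"])
    fix i assume "i < nat 1"
    then have "i = 0" by simp
    then show "D num ?G (Kin ([p] ! i) p q)" using Kin_intro[OF og' order_refl refl hg hg] by simp
  qed (use l in auto)
  then have "D num ?G (AT p q (Pre (num 1)))" by (rule iffD2'[OF Def[OF og' l]])
  then show "D num \<Gamma> (Imp (Gt p q) (AT p q (Pre (num 1))))" by (rule impI'[OF _ og])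
qed

abbreviation "bD \<equiv> freshb G (X @ V)"
abbreviation "UD \<equiv> map (\<lambda>j. GV (bD + 1 + j)) [0..<length X]"

definition RB :: "'p list \<Rightarrow> 'p list \<Rightarrow> int \<Rightarrow> 'p form" where
  "RB p q k = And (lexless (map Pre p) (map Var UD)) (Atleast UT (X @ V) K (map Var UD @ map Pre q) (Pre (num k)))"

definition RHS :: "'p list \<Rightarrow> 'p list \<Rightarrow> int \<Rightarrow> 'p form" where
  "RHS p q k = And (Gt p q) (exs UD (RB p q k))"

lemma UD_copy: "UD = copyvars (bD + 1) (length X) 0"
  by (simp add: copyvars_def)

lemma UD_distinct: "distinct UD" by (simp add: distinct_map inj_on_def)

lemma RB_props:
  assumes l: "length p = length X" "length q = length V"
  shows "fv (RB p q k) \<subseteq> set UD" "sig1 num (RB p q k)"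
proof -
  have "fv (lexless (map Pre p) (map Var UD) :: 'p form) \<subseteq> set UD"
    using fv_lexless[of "map Pre p" "map Var UD"] by auto
  then show "fv (RB p q k) \<subseteq> set UD" by (auto simp: RB_def)
  have "wf num (lexless (map Pre p) (map Var UD))" by (rule wf_lexless) auto
  then show "sig1 num (RB p q k)" using Kagg l by (auto simp: RB_def sig1_def aggwf_def)
qed

lemma RHS_props:
  assumes l: "length p = length X" "length q = length V"
  shows "fv (RHS p q k) = {}" "sig1 num (RHS p q k)"
  using RB_props[OF l, of k] Gt_props[of p q] by (auto simp: RHS_def)

lemma RB_inst:
  assumes lu: "map d UD = u"
  shows "ssub (gi (set UD) d) (RB p q k) = And (lexless (map Pre p) (map Pre u)) (AT u q (Pre (num k)))"
proof -
  have "map (tsub (gi (set UD) d)) (map Var UD) = map Pre u"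
  proof -
    have "map (tsub (gi (set UD) d)) (map Var UD) = map (\<lambda>v. Pre (d v)) UD"
      by (simp add: gi_def)
    then show ?thesis using lu by auto
  qed
  moreover have "map (tsub (gi (set UD) d)) (map Pre l) = map Pre l" for l :: "'p list" by simp
  ultimately show ?thesis unfolding RB_def by (simp del: map_map)
qed

lemma lex_true:
  assumes og: "okG num \<Gamma>" and lt: "p < u" "length p = length u"
  shows "D num \<Gamma> (lexless (map Pre p) (map Pre u))"
  by (rule trueI[OF og, where e="\<lambda>_. num 0"]) (use lt sat_lexless[OF lt(2)] in auto)

lemma in_ts_G:
  assumes "x \<in> set ts" "\<forall>i<length ts. D num \<Gamma> (Kin (ts ! i) a s)"
  shows "D num \<Gamma> (Gt x s)"
proof -
  obtain i where "i < length ts" "ts ! i = x" using assms(1) by (auto simp: in_set_conv_nth)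
  then show ?thesis using assms(2) Kin_G1 by blast
qed

lemma fwd:
  assumes og: "okG num \<Gamma>" and cl: "\<Union>(fv ` \<Gamma>) = {}" and l: "length p = length X" "length q = length V"
    and k: "0 < k" and d: "D num \<Gamma> (AT p q (Pre (num (k + 1))))"
  shows "D num \<Gamma> (RHS p q k)"
proof -
  have b: "D num \<Gamma> (Bk p q (k + 1))" by (rule iffD1'[OF Def[OF og l] d])
  show ?thesis
  proof (rule Bk_elim[OF _ b l cl])
    show "0 < k + 1" using k by simp
    show "fv (RHS p q k) = {}" "sig1 num (RHS p q k)" by (rule RHS_props[OF l])+
    fix ts \<Gamma>' assume lt: "length ts = nat (k + 1)" and lts: "\<forall>t\<in>set ts. length t = length X"
      and sub: "\<Gamma> \<subseteq> \<Gamma>'" and og': "okG num \<Gamma>'"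
      and hk: "\<forall>i<nat (k + 1). D num \<Gamma>' (Kin (ts ! i) p q)"
      and hd: "\<forall>i j. i < j \<longrightarrow> j < nat (k + 1) \<longrightarrow> D num \<Gamma>' (Neg (teq (ts ! i) (ts ! j)))"
    have lt': "length ts = Suc (nat k)" using lt k by (simp add: nat_add_distrib)
    have hk': "\<forall>i<length ts. D num \<Gamma>' (Kin (ts ! i) p q)" using hk lt by simp
    have sR: "sig1 num (RHS p q k)" by (rule RHS_props[OF l])
    show "D num \<Gamma>' (RHS p q k)"
    proof (cases "\<exists>i<length ts. ts ! i < p")
      case True
      then obtain i where i: "i < length ts" "ts ! i < p" by blast
      have "length (ts ! i) = length p" using lts i(1) l by auto
      then show ?thesis using Kin_neg_false[OF hk'[rule_format, OF i(1)] i(2) _ sR] by simp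
    next
      case False
      have ge: "\<forall>t\<in>set ts. p \<le> t"
      proof
        fix t assume "t \<in> set ts"
        then obtain i where "i < length ts" "ts ! i = t" by (auto simp: in_set_conv_nth)
        then show "p \<le> t" using False by (metis not_less)
      qed
      show ?thesis
      proof (cases "distinct ts")
        case False
        then obtain i j where ij: "i < j" "j < length ts" "ts ! i = ts ! j"
          by (auto simp: distinct_conv_nth) (metis linorder_neqE_nat)
        have "j < nat (k + 1)" using ij lt by simp
        then have "D num \<Gamma>' (Neg (teq (ts ! i) (ts ! j)))" using hd ij(1) by blast
        then have "D num \<Gamma>' (Neg (teq (ts ! j) (ts ! j)))" using ij(3) by simp
        then show ?thesis using teq_false sR by blast
      next
        case True
        have k0: "0 < nat k" using k by simp
        obtain u w where uw: "u \<in> set ts" "p < u" "length w = nat k" "distinct w" "set w \<subseteq> set ts"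
          "\<forall>x\<in>set w. u \<le> x" using pick[OF lt' k0 True ge] by blast
        have "0 < length ts" using lt' by simp
        then have gp: "D num \<Gamma>' (Gt p q)" using hk' by (blast intro: Kin_G2)
        have gx: "\<And>x. x \<in> set ts \<Longrightarrow> D num \<Gamma>' (Gt x q)" using in_ts_G hk' by blast
        have lu: "length u = length X" using uw(1) lts by blast
        have lw: "\<forall>t\<in>set w. length t = length X" using uw(5) lts by blast
        let ?d = "eOf (bD + 1) (length X) [u]"
        have md: "map ?d UD = u" unfolding UD_copy using map_eOf[of 0 "[u]" "length X" "bD + 1"] lu by simp
        have at: "D num \<Gamma>' (AT u q (Pre (num k)))"
        proof (rule iffD2'[OF Def[OF og' lu l(2)]])
          show "D num \<Gamma>' (Bk u q k)"
          proof (rule Bk_intro[OF k og' lu l(2), where ts=w])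
            show "length w = nat k" by (rule uw(3))
            show "\<forall>t\<in>set w. length t = length X" by (rule lw)
            fix i assume i: "i < nat k"
            then have wi: "w ! i \<in> set w" using uw(3) by simp
            show "D num \<Gamma>' (Kin (w ! i) u q)"
            proof (rule Kin_intro[OF og'])
              show "u \<le> w ! i" using uw(6) wi by blast
              show "length (w ! i) = length u" using lw wi lu by simp
              show "D num \<Gamma>' (Gt (w ! i) q)" using gx uw(5) wi by blast
              show "D num \<Gamma>' (Gt u q)" using gx uw(1) by blast
            qed
          next
            fix i j assume ij: "i < j" "j < nat k"
            have ne: "w ! i \<noteq> w ! j" using uw(3,4) ij by (simp add: nth_eq_iff_index_eq)
            have "length (w ! i) = length (w ! j)" using lw uw(3) ij by simp
            then show "D num \<Gamma>' (Neg (teq (w ! i) (w ! j)))" by (rule teq_true[OF og' ne])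
          qed
        qed
        have lx: "D num \<Gamma>' (lexless (map Pre p) (map Pre u))" by (rule lex_true[OF og' uw(2)]) (use l lu in simp)
        have inst: "D num \<Gamma>' (ssub (gi (set UD) ?d) (RB p q k))"
          unfolding RB_inst[OF md] by (rule andI'[OF lx at])
        have gs: "gsort num (set UD) ?d" by (auto simp: gsort_def)
        have ex: "D num \<Gamma>' (exs UD (RB p q k))"
          by (rule exs_intro[OF inst UD_distinct gs RB_props(2)[OF l]])
        show ?thesis unfolding RHS_def by (rule andI'[OF gp ex])
      qed
    qed
  qed
qed

lemma bwd:
  assumes og: "okG num \<Gamma>" and cl: "\<Union>(fv ` \<Gamma>) = {}" and l: "length p = length X" "length q = length V"
    and k: "0 < k" and d: "D num \<Gamma> (RHS p q k)"
  shows "D num \<Gamma> (AT p q (Pre (num (k + 1))))"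
proof -
  have gp: "D num \<Gamma> (Gt p q)" using andE1'[OF d[unfolded RHS_def]] .
  have e: "D num \<Gamma> (exs UD (RB p q k))" using andE2'[OF d[unfolded RHS_def]] .
  let ?C = "AT p q (Pre (num (k + 1)))"
  have sC: "sig1 num ?C" by (rule AT_sig1[OF l])
  show ?thesis
  proof (rule exs_elim[OF e UD_distinct sC])
    show "\<forall>v\<in>set UD. v \<notin> \<Union>(fv ` \<Gamma>) \<and> v \<notin> fv ?C" using cl by simp
    fix d assume gsd: "gsort num (set UD) d"
    let ?u = "map d UD"
    let ?H = "ssub (gi (set UD) d) (RB p q k)"
    let ?G3 = "insert ?H \<Gamma>"
    have sH: "sig1 num ?H" by (rule sig1_ssub_gi[OF RB_props(2)[OF l] gsd])
    have og3: "okG num ?G3" using og sH by simp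
    have fH: "fv ?H = {}"
    proof -
      have "fv ?H \<subseteq> (\<Union>v\<in>fv (RB p q k). tvars (gi (set UD) d v))" by (rule fv_ssub)
      also have "\<dots> = {}" using RB_props(1)[OF l, of k] by (auto simp: gi_def)
      finally show ?thesis by simp
    qed
    have cl3: "\<Union>(fv ` ?G3) = {}" using cl fH by simp
    have lu: "length ?u = length X" by simp
    have h3: "D num ?G3 (And (lexless (map Pre p) (map Pre ?u)) (AT ?u q (Pre (num k))))"
      using hypI[OF _ og3, of ?H] unfolding RB_inst[OF refl] by simp
    have lx: "D num ?G3 (lexless (map Pre p) (map Pre ?u))" using andE1'[OF h3] .
    show "D num ?G3 ?C"
    proof (cases "p < ?u")
      case False
      have ns: "\<not> sat num (\<lambda>_. num 0) (lexless (map Pre p) (map Pre ?u))"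
        using False sat_lexless[of p ?u num] l by simp
      show ?thesis by (rule falseE[OF lx lexless_props(3) lexless_ground_props(1) ns sC])
    next
      case True
      have b: "D num ?G3 (Bk ?u q k)" by (rule iffD1'[OF Def[OF og3 lu l(2)] andE2'[OF h3]])
      show ?thesis
      proof (rule Bk_elim[OF k b lu l(2) cl3])
        show "fv ?C = {}" by simp
        show "sig1 num ?C" by (rule sC)
        fix w \<Gamma>4 assume lw: "length w = nat k" and lws: "\<forall>t\<in>set w. length t = length X"
          and sub: "?G3 \<subseteq> \<Gamma>4" and og4: "okG num \<Gamma>4"
          and hk: "\<forall>i<nat k. D num \<Gamma>4 (Kin (w ! i) ?u q)"
          and hd: "\<forall>i j. i < j \<longrightarrow> j < nat k \<longrightarrow> D num \<Gamma>4 (Neg (teq (w ! i) (w ! j)))"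
        show "D num \<Gamma>4 ?C"
        proof (cases "\<exists>i<nat k. w ! i < ?u")
          case True
          then obtain i where i: "i < nat k" "w ! i < ?u" by blast
          have "length (w ! i) = length ?u" using lws i(1) lw by simp
          then show ?thesis using Kin_neg_false[OF hk[rule_format, OF i(1)] i(2) _ sC] by simp
        next
          case False
          then have ge: "\<And>i. i < nat k \<Longrightarrow> ?u \<le> w ! i" by (meson not_less)
          show ?thesis
          proof (cases "distinct w")
            case False
            then obtain i j where ij: "i < j" "j < length w" "w ! i = w ! j"
              by (auto simp: distinct_conv_nth) (metis linorder_neqE_nat)
            have "j < nat k" using ij lw by simp
            then have "D num \<Gamma>4 (Neg (teq (w ! i) (w ! j)))" using hd ij(1) by blast
            then have "D num \<Gamma>4 (Neg (teq (w ! j) (w ! j)))" using ij(3) by simp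
            then show ?thesis using teq_false sC by blast
          next
            case dw: True
            have gp4: "D num \<Gamma>4 (Gt p q)" by (rule weakI[OF gp _ og4]) (use sub in blast)
            let ?ts = "p # w"
            have kk: "0 < k + 1" using k by simp
            have "D num \<Gamma>4 (Bk p q (k + 1))"
            proof (rule Bk_intro[OF kk og4 l, where ts="?ts"])
              show "length ?ts = nat (k + 1)" using lw k by (simp add: nat_add_distrib)
              show "\<forall>t\<in>set ?ts. length t = length X" using lws l by simp
              fix i assume i: "i < nat (k + 1)"
              show "D num \<Gamma>4 (Kin (?ts ! i) p q)"
              proof (cases i)
                case 0
                then show ?thesis using Kin_intro[OF og4 order_refl refl gp4 gp4] by simp
              next
                case (Suc j)
                then have j: "j < nat k" using i k by (simp add: nat_add_distrib)
                have pw: "p \<le> w ! j" using True ge[OF j] by simp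
                have lwj: "length (w ! j) = length p" using lws lw j l by simp
                have g: "D num \<Gamma>4 (Gt (w ! j) q)" using Kin_G1 hk j by blast
                show ?thesis using Kin_intro[OF og4 pw lwj g gp4] Suc by simp
              qed
            next
              fix i j assume ij: "i < j" "j < nat (k + 1)"
              then obtain j' where j': "j = Suc j'" "j' < nat k" using k
                by (cases j) (auto simp: nat_add_distrib)
              show "D num \<Gamma>4 (Neg (teq (?ts ! i) (?ts ! j)))"
              proof (cases i)
                case 0
                have "p < w ! j'" using True ge[OF j'(2)] by simp
                then have ne: "p \<noteq> w ! j'" by simp
                have "length p = length (w ! j')" using lws lw j'(2) l by simp
                then show ?thesis using teq_true[OF og4 ne] 0 j'(1) by simp
              next
                case (Suc i')
                have i': "i' < j'" using ij(1) Suc j'(1) by simp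
                have ne: "w ! i' \<noteq> w ! j'" using dw i' j'(2) lw by (simp add: nth_eq_iff_index_eq)
                have "length (w ! i') = length (w ! j')" using lws lw j'(2) i' by simp
                then show ?thesis using teq_true[OF og4 ne] Suc j'(1) by simp
              qed
            qed
            then show ?thesis by (rule iffD2'[OF Def[OF og4 l]])
          qed
        qed
      qed
    qed
  qed
qed

lemma ground3:
  assumes og: "okG num \<Gamma>" and cl: "\<Union>(fv ` \<Gamma>) = {}" and l: "length p = length X" "length q = length V"
  shows "D num \<Gamma> (Imp (Cmp cmp.Gt (Pre (num k)) (Pre (num 0)))
            (Iff (AT p q (Plus (Pre (num k)) (Pre (num 1)))) (RHS p q k)))"
proof -
  let ?C = "Cmp cmp.Gt (Pre (num k)) (Pre (num 0))"
  let ?G1 = "insert ?C \<Gamma>"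
  have og1: "okG num ?G1" using og by simp
  have cl1: "\<Union>(fv ` ?G1) = {}" using cl by simp
  have sR: "sig1 num (RHS p q k)" by (rule RHS_props[OF l])
  have sA: "sig1 num (AT p q (Plus (Pre (num k)) (Pre (num 1))))"
    using Kagg l by (auto simp: sig1_def aggwf_def gtrm_def)
  have "D num ?G1 (Iff (AT p q (Plus (Pre (num k)) (Pre (num 1)))) (RHS p q k))"
  proof (cases "0 < k")
    case False
    have h: "D num ?G1 ?C" by (rule hypI[OF _ og1]) simp
    have "\<not> sat num (\<lambda>_. num 0) ?C" using False num_less by simp
    then show ?thesis using falseE[OF h _ _ _] sA sR by simp
  next
    case True
    show ?thesis
    proof (rule iffI')
      let ?G2 = "insert (AT p q (Plus (Pre (num k)) (Pre (num 1)))) ?G1"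
      have og2: "okG num ?G2" using og1 sA by simp
      have cl2: "\<Union>(fv ` ?G2) = {}" using cl1 by simp
      have h: "D num ?G2 (AT p q (Plus (Pre (num k)) (Pre (num 1))))" by (rule hypI[OF _ og2]) simp
      have "D num ?G2 (AT p q (Pre (num (k + 1))))"
        using plus_to_num[OF mono, of ?G2 UT "X @ V" K "p @ q" k] h by simp
      then have "D num ?G2 (RHS p q k)" by (rule fwd[OF og2 cl2 l True])
      then show "D num ?G1 (Imp (AT p q (Plus (Pre (num k)) (Pre (num 1)))) (RHS p q k))"
        by (rule impI'[OF _ og1])
    next
      let ?G2 = "insert (RHS p q k) ?G1"
      have og2: "okG num ?G2" using og1 sR by simp
      have cl2: "\<Union>(fv ` ?G2) = {}" using cl1 RHS_props(1)[OF l] by simp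
      have h: "D num ?G2 (RHS p q k)" by (rule hypI[OF _ og2]) simp
      have "D num ?G2 (AT p q (Pre (num (k + 1))))" by (rule bwd[OF og2 cl2 l True h])
      then have "D num ?G2 (AT p q (Plus (Pre (num k)) (Pre (num 1))))"
        using num_to_plus[OF mono, of ?G2 UT "X @ V" K "p @ q" k] by simp
      then show "D num ?G1 (Imp (RHS p q k) (AT p q (Plus (Pre (num k)) (Pre (num 1)))))"
        by (rule impI'[OF _ og1])
    qed
  qed
  then show ?thesis by (rule impI'[OF _ og])
qed

end

lemma map_gi_in: "set xs \<subseteq> S \<Longrightarrow> map (gi S c) xs = map Pre (map c xs)"
  by (induction xs) (auto simp: gi_def)

lemma tr_lexless[simp]: "tr (lexless xs us) = lexless xs us"
  by (rule tr_noStart) simp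

context L
begin

abbreviation "NN \<equiv> IV bD"
abbreviation "SS \<equiv> set (X @ V @ [NN])"

lemma dist_S: "distinct (X @ V @ [NN])"
proof -
  have "NN \<notin> set (X @ V)" using aggX(2) by fastforce
  then show ?thesis using aggX(1) by simp
qed

lemma UD_out: "\<forall>v\<in>set UD. gi SS c v = Var v"
proof -
  have "\<And>v. v \<in> set (X @ V) \<Longrightarrow> vidx v < bD" by (rule freshb_gt) simp
  then have "\<And>j. GV (bD + 1 + j) \<notin> set (X @ V)" by fastforce
  then show ?thesis by (auto simp: gi_def)
qed

lemma gsort_N: "gsort num SS c \<Longrightarrow> \<exists>k. c NN = num k"
  by (auto simp: gsort_def)

lemma map_sig_X: "map (gi SS c) X = map Pre (map c X)" by (rule map_gi_in) auto
lemma map_sig_V: "map (gi SS c) V = map Pre (map c V)" by (rule map_gi_in) auto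
lemma sig_N: "gi SS c NN = Pre (c NN)" by (simp add: gi_def)

lemma sigG: "ssub (gi SS c) G = Gt (map c X) (map c V)"
proof -
  have "map (gi SS c) (X @ V) = map Pre (map c X @ map c V)" by (simp only: map_append map_sig_X map_sig_V)
  then show ?thesis by (rule ssub_G_eq) simp_all
qed

lemma Kw: "aggok UT (X @ V) K" "wf num K" using Kagg by (auto simp: aggwf_def)

lemma D0_1: "D num {} (tr (alls (X @ V @ [NN]) (Imp (Cmp Le (Var NN) (Pre (num 0)))
                  (Start X V G (map Var X) (map Var V) (Var NN)))))"
proof -
  let ?B = "Imp (Cmp Le (Var NN) (Pre (num 0))) (Atleast UT (X @ V) K (map Var X @ map Var V) (Var NN))"
  have "D num {} (alls (X @ V @ [NN]) ?B)"
  proof (rule alls_omega[OF dist_S okG_empty])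
    show "sig1 num ?B" using Kw by (auto simp: sig1_def)
    fix c assume gs: "gsort num SS c"
    obtain k where k: "c NN = num k" using gsort_N[OF gs] by blast
    have e: "ssub (gi SS c) ?B = Imp (Cmp Le (Pre (num k)) (Pre (num 0))) (AT (map c X) (map c V) (Pre (num k)))"
      by (simp only: ssub.simps tsub.simps map_append map_map tsub_comp_Var map_sig_X map_sig_V sig_N k)
    show "D num {} (ssub (gi SS c) ?B)" unfolding e by (rule ground1) simp_all
  qed
  then show ?thesis by simp
qed

lemma D0_2: "D num {} (tr (alls (X @ V) (Iff (Start X V G (map Var X) (map Var V) (Pre (num 1))) G)))"
proof -
  let ?B = "Iff (Atleast UT (X @ V) K (map Var X @ map Var V) (Pre (num 1))) G"
  have trG: "tr G = G" using aggX(3) by (intro tr_noStart base_noStart)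
  have "D num {} (alls (X @ V) ?B)"
  proof (rule alls_omega[OF aggX(1) okG_empty])
    show "sig1 num ?B" using Kw aggX(3,5) by (auto simp: sig1_def base_noStart)
    fix c assume gs: "gsort num (set (X @ V)) c"
    have mX: "map (gi (set (X @ V)) c) X = map Pre (map c X)" by (rule map_gi_in) auto
    have mV: "map (gi (set (X @ V)) c) V = map Pre (map c V)" by (rule map_gi_in) auto
    have "map (gi (set (X @ V)) c) (X @ V) = map Pre (map c X @ map c V)" by (simp only: map_append mX mV)
    then have g: "ssub (gi (set (X @ V)) c) G = Gt (map c X) (map c V)" by (rule ssub_G_eq) simp_all
    have e: "ssub (gi (set (X @ V)) c) ?B = Iff (AT (map c X) (map c V) (Pre (num 1))) (Gt (map c X) (map c V))"
      by (simp only: ssub_Iff ssub.simps tsub.simps map_append map_map tsub_comp_Var mX mV g)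
    show "D num {} (ssub (gi (set (X @ V)) c) ?B)" unfolding e by (rule ground2) simp_all
  qed
  then show ?thesis using trG by simp
qed

lemma D0_3: "D num {} (tr (alls (X @ V @ [NN]) (Imp (Cmp cmp.Gt (Var NN) (Pre (num 0)))
           (Iff (Start X V G (map Var X) (map Var V) (Plus (Var NN) (Pre (num 1))))
                (And G (exs UD (And (lexless (map Var X) (map Var UD)) (Start X V G (map Var UD) (map Var V) (Var NN)))))))))"
proof -
  let ?R = "And (lexless (map Var X) (map Var UD)) (Atleast UT (X @ V) K (map Var UD @ map Var V) (Var NN))"
  let ?B = "Imp (Cmp cmp.Gt (Var NN) (Pre (num 0)))
           (Iff (Atleast UT (X @ V) K (map Var X @ map Var V) (Plus (Var NN) (Pre (num 1))))
                (And G (exs UD ?R)))"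
  have trG: "tr G = G" using aggX(3) by (intro tr_noStart base_noStart)
  have "D num {} (alls (X @ V @ [NN]) ?B)"
  proof (rule alls_omega[OF dist_S okG_empty])
    have "wf num (lexless (map Var X) (map Var UD))" by (rule wf_lexless) auto
    then show "sig1 num ?B" using Kw aggX(3,5) by (auto simp: sig1_def base_noStart gtrm_def)
    fix c assume gs: "gsort num SS c"
    obtain k where k: "c NN = num k" using gsort_N[OF gs] by blast
    have mUD: "map (gi SS c) UD = map Var UD" by (rule map_cong[OF refl]) (use UD_out[of c] in blast)
    have mUD2: "map (tsub (gi SS c) \<circ> (Var \<circ> (\<lambda>j. GV (bD + 1 + j)))) [0..<length X]
        = map (Var \<circ> (\<lambda>j. GV (bD + 1 + j))) [0..<length X]"
    proof (rule map_cong[OF refl])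
      fix j assume "j \<in> set [0..<length X]"
      then have "GV (bD + 1 + j) \<in> set UD" by auto
      then have "gi SS c (GV (bD + 1 + j)) = Var (GV (bD + 1 + j))" using UD_out[of c] by blast
      then show "(tsub (gi SS c) \<circ> (Var \<circ> (\<lambda>j. GV (bD + 1 + j)))) j = (Var \<circ> (\<lambda>j. GV (bD + 1 + j))) j"
        by simp
    qed
    have eR: "ssub (gi SS c) ?R = RB (map c X) (map c V) k"
      unfolding RB_def by (simp only: ssub_lexless ssub.simps tsub.simps map_append map_map tsub_comp_Var map_sig_X map_sig_V sig_N k mUD2)
    have eE: "ssub (gi SS c) (exs UD ?R) = exs UD (RB (map c X) (map c V) k)"
      using ssub_exs[OF UD_out[of c]] eR by simp
    have eA: "ssub (gi SS c) (Atleast UT (X @ V) K (map Var X @ map Var V) (Plus (Var NN) (Pre (num 1))))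
        = AT (map c X) (map c V) (Plus (Pre (num k)) (Pre (num 1)))"
      by (simp only: ssub.simps tsub.simps map_append map_map tsub_comp_Var map_sig_X map_sig_V sig_N k)
    have eC: "ssub (gi SS c) (Cmp cmp.Gt (Var NN) (Pre (num 0))) = Cmp cmp.Gt (Pre (num k)) (Pre (num 0))"
      by (simp only: ssub.simps tsub.simps sig_N k)
    have e: "ssub (gi SS c) ?B = Imp (Cmp cmp.Gt (Pre (num k)) (Pre (num 0)))
            (Iff (AT (map c X) (map c V) (Plus (Pre (num k)) (Pre (num 1)))) (RHS (map c X) (map c V) k))"
      unfolding RHS_def by (simp only: ssub_Iff ssub.simps(7) ssub.simps(9) eA eC sigG eE)
    show "D num {} (ssub (gi SS c) ?B)" unfolding e by (rule ground3) simp_all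
  qed
  then show ?thesis using trG by simp
qed

end

lemma D0_derivable:
  assumes m: "strict_mono num"
  shows "\<forall>F\<in>D0 num. D num {} (tr F)"
proof
  fix F assume "F \<in> D0 num"
  then obtain X V G where ag: "aggwf num X V G" and
    F: "F \<in> (let b = freshb G (X @ V); N = IV b;
                   U = map (\<lambda>j. GV (b + 1 + j)) [0..<length X];
                   Xs = map Var X; Vs = map Var V; Us = map Var U in
      { alls (X @ V @ [N]) (Imp (Cmp Le (Var N) (Pre (num 0))) (Start X V G Xs Vs (Var N))),
        alls (X @ V) (Iff (Start X V G Xs Vs (Pre (num 1))) G),
        alls (X @ V @ [N]) (Imp (Cmp Gt (Var N) (Pre (num 0)))
           (Iff (Start X V G Xs Vs (Plus (Var N) (Pre (num 1))))
                (And G (exs U (And (lexless Xs Us) (Start X V G Us Vs (Var N)))))))})"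
    unfolding D0_def by blast
  interpret L num X V G using m ag by unfold_locales
  show "D num {} (tr F)" using F D0_1 D0_2 D0_3 by (auto simp: Let_def)
qed

theorem lemma9:
  fixes num :: "int \<Rightarrow> 'p::linorder" and F :: "'p form"
  assumes "strict_mono num"
    and "\<forall>p m n. num m \<le> p \<and> p \<le> num n \<longrightarrow> (\<exists>k. p = num k)"
    and "sentence1 num F"
    and "HTsharp2_from num (D0 num) F"
  shows "HTsharp num F"
proof -
  have d: "deriv num (sig2 num) (HTax num \<union> D0 num) {} F"
    using assms(4) by (simp add: HTsharp2_from_def)
  have "D num (tr ` {}) (tr F)" by (rule translate[OF d D0_derivable[OF assms(1)]])
  moreover have "tr F = F" using assms(3) by (intro tr_noStart) (simp add: sentence1_def sig1_def)
  ultimately show ?thesis by (simp add: HTsharp_def)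
qed

end
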